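(* Let $C_{48}\subset\mathbb{P}^2_{\mathbb{C}}$ be the smooth quartic $x^4+y^4+xz^3=0$, and let $\mathcal{L}$ be the arrangement of its $28$ bitangent lines (the $24$ ordinary bitangents together with the $4$ hyperosculating lines). Then the only intersection points of lines of $\mathcal{L}$ are double, triple and quadruple points, and $$n_2(\mathcal{L})=240,\qquad n_3(\mathcal{L})=32,\qquad n_4(\mathcal{L})=7.$$
   Context: A bitangent line of a smooth plane quartic $C$ is a line tangent to $C$ at two distinct points, or a hyperosculating line, i.e. a line meeting $C$ at a single point with local intersection multiplicity $4$; a smooth plane quartic has $28$ bitangents counted this way. For a line arrangement $\mathcal{L}$, $n_i(\mathcal{L})$ denotes the number of points of $\mathbb{P}^2$ lying on exactly $i$ lines of $\mathcal{L}$. *)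

theory Defs
  imports "HOL-Computational_Algebra.Polynomial"
begin

text \<open>Homogeneous coordinates on the complex projective plane: nonzero triples.
  The same triples serve as coefficient vectors of lines (dual plane).\<close>

type_synonym pt3 = "complex \<times> complex \<times> complex"

definition smult3 :: "complex \<Rightarrow> pt3 \<Rightarrow> pt3" where
  "smult3 c p = (case p of (x, y, z) \<Rightarrow> (c * x, c * y, c * z))"

definition proj_class :: "pt3 \<Rightarrow> pt3 set" where
  "proj_class p = {smult3 c p | c. c \<noteq> 0}"

definition P2 :: "pt3 set set" where
  "P2 = {proj_class p | p. p \<noteq> (0, 0, 0)}"

definition incid :: "pt3 \<Rightarrow> pt3 \<Rightarrow> bool" where
  "incid l p = (case l of (a, b, c) \<Rightarrow> case p of (x, y, z) \<Rightarrow> a * x + b * y + c * z = 0)"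

definition F48 :: "pt3 \<Rightarrow> complex" where
  "F48 p = (case p of (x, y, z) \<Rightarrow> x ^ 4 + y ^ 4 + x * z ^ 3)"

definition restr48 :: "pt3 \<Rightarrow> pt3 \<Rightarrow> complex poly" where
  "restr48 p q = (case p of (x0, y0, z0) \<Rightarrow> case q of (x1, y1, z1) \<Rightarrow>
      [:x0, x1:] ^ 4 + [:y0, y1:] ^ 4 + [:x0, x1:] * [:z0, z1:] ^ 3)"

text \<open>Local intersection multiplicity of C48 and the line l at the point p of l:
  order of vanishing at t = 0 of F48 (p + t q), with q any point of l different from p.\<close>
definition int_mult :: "pt3 \<Rightarrow> pt3 \<Rightarrow> nat" where
  "int_mult l p = order 0 (restr48 p (SOME q. incid l q \<and> \<not> (\<exists>c. q = smult3 c p)))"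

definition bitangent48 :: "pt3 \<Rightarrow> bool" where
  "bitangent48 l \<longleftrightarrow> l \<noteq> (0, 0, 0) \<and>
    ((\<exists>p1 p2. p1 \<noteq> (0, 0, 0) \<and> p2 \<noteq> (0, 0, 0) \<and> incid l p1 \<and> incid l p2 \<and>
        proj_class p1 \<noteq> proj_class p2 \<and> int_mult l p1 \<ge> 2 \<and> int_mult l p2 \<ge> 2)
     \<or> (\<exists>p. p \<noteq> (0, 0, 0) \<and> incid l p \<and> int_mult l p = 4 \<and>
        (\<forall>p'. p' \<noteq> (0, 0, 0) \<and> incid l p' \<and> F48 p' = 0 \<longrightarrow> proj_class p' = proj_class p)))"

definition bitangent_arr :: "pt3 set set" where
  "bitangent_arr = {proj_class l | l. bitangent48 l}"

definition lines_through :: "pt3 set set \<Rightarrow> pt3 set \<Rightarrow> pt3 set set" where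
  "lines_through A P = {L \<in> A. \<exists>l\<in>L. \<exists>p\<in>P. incid l p}"

definition n_pts :: "pt3 set set \<Rightarrow> nat \<Rightarrow> nat" where
  "n_pts A i = card {P \<in> P2. card (lines_through A P) = i}"

end

theory Submission
  imports Defs
begin

lemma three_dvd_sq: fixes m :: int assumes "3 dvd m^2" shows "3 dvd m"
proof (rule ccontr)
  assume n: "\<not> 3 dvd m"
  then have "m mod 3 = 1 \<or> m mod 3 = 2" by presburger
  moreover have "m^2 mod 3 = ((m mod 3)^2) mod 3" by (simp add: power_mod)
  ultimately have "m^2 mod 3 \<noteq> 0" by auto
  with assms show False by (simp add: dvd_eq_mod_eq_0)
qed

lemma sq3_aux: "\<forall>m n. (m::int)^2 = 3 * n^2 \<longrightarrow> nat \<bar>n\<bar> = N \<longrightarrow> n = 0"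
proof (induction N rule: less_induct)
  case (less N)
  show ?case
  proof (intro allI impI)
    fix m n :: int assume h: "m^2 = 3 * n^2" and N: "nat \<bar>n\<bar> = N"
    have "3 dvd m" using h three_dvd_sq by simp
    then obtain k where k: "m = 3 * k" by blast
    have h2: "n^2 = 3 * k^2" using h k by (simp add: power_mult_distrib)
    then have "3 dvd n" using three_dvd_sq by simp
    then obtain l where l: "n = 3 * l" by blast
    have h3: "k^2 = 3 * l^2" using h2 l by (simp add: power_mult_distrib)
    show "n = 0"
    proof (rule ccontr)
      assume "n \<noteq> 0"
      then have "nat \<bar>l\<bar> < N" using N l by auto
      then have "l = 0" using less h3 by blast
      then show False using l \<open>n \<noteq> 0\<close> by simp
    qed
  qed
qed

lemma sqrt3_sq: "sqrt 3 * sqrt 3 = (3::real)" by simp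

lemma sqrt3_indep: fixes m n :: int assumes "of_int m + of_int n * sqrt 3 = 0" shows "m = 0 \<and> n = 0"
proof -
  have "n = 0"
  proof (rule ccontr)
    assume nz: "n \<noteq> 0"
    have "of_int m = - of_int n * sqrt 3" using assms by (simp add: algebra_simps)
    then have "(of_int m)^2 = (of_int n)^2 * (sqrt 3 * sqrt 3)" by (simp add: power2_eq_square algebra_simps)
    then have "of_int (m^2) = (of_int (3 * n^2) :: real)" by simp
    then have "m^2 = 3 * n^2" by (simp only: of_int_eq_iff)
    then show False using sq3_aux nz by blast
  qed
  then show ?thesis using assms by simp
qed

definition zt :: complex where "zt = Complex (sqrt 3 / 2) (1/2)"

lemma Re_zt: "Re zt = sqrt 3 / 2" and Im_zt: "Im zt = 1/2" by (simp_all add: zt_def)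
lemma zt2: "zt^2 = Complex (1/2) (sqrt 3 / 2)"
  by (simp add: power2_eq_square complex_eq_iff Re_zt Im_zt)
lemma zt3: "zt^3 = \<i>"
proof -
  have "zt^3 = zt^2 * zt" by (simp add: power2_eq_square power3_eq_cube)
  then show ?thesis by (simp add: zt2 complex_eq_iff Re_zt Im_zt)
qed
lemma zt4: "zt^4 = zt^2 - 1"
proof -
  have "zt^4 = zt^3 * zt" by (simp add: power_Suc2 numeral_eq_Suc del: power_Suc)
  then show ?thesis by (simp add: zt3 zt2 complex_eq_iff Re_zt Im_zt)
qed

type_synonym zz = "int \<times> int \<times> int \<times> int"

fun emb :: "zz \<Rightarrow> complex" where
  "emb (a0,a1,a2,a3) = of_int a0 + of_int a1 * zt + of_int a2 * zt^2 + of_int a3 * zt^3"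

fun zadd :: "zz \<Rightarrow> zz \<Rightarrow> zz" where
 "zadd (a0,a1,a2,a3) (b0,b1,b2,b3) = (a0+b0,a1+b1,a2+b2,a3+b3)"
fun zsub :: "zz \<Rightarrow> zz \<Rightarrow> zz" where
 "zsub (a0,a1,a2,a3) (b0,b1,b2,b3) = (a0-b0,a1-b1,a2-b2,a3-b3)"
fun zmul :: "zz \<Rightarrow> zz \<Rightarrow> zz" where
 "zmul (a0,a1,a2,a3) (b0,b1,b2,b3) =
   (a0*b0 - (a1*b3+a2*b2+a3*b1) - a3*b3, (a0*b1+a1*b0) - (a2*b3+a3*b2),
    (a0*b2+a1*b1+a2*b0) + (a1*b3+a2*b2+a3*b1), (a0*b3+a1*b2+a2*b1+a3*b0) + (a2*b3+a3*b2))"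

lemma emb_add: "emb (zadd a b) = emb a + emb b"
  by (cases a; cases b) (simp add: algebra_simps)
lemma emb_sub: "emb (zsub a b) = emb a - emb b"
  by (cases a; cases b) (simp add: algebra_simps)

lemma zt_ring: fixes z :: complex assumes "z^4 = z^2 - 1"
  shows "(a0 + a1*z + a2*z^2 + a3*z^3) * (b0 + b1*z + b2*z^2 + b3*z^3) =
    (a0*b0 - (a1*b3+a2*b2+a3*b1) - a3*b3) + ((a0*b1+a1*b0) - (a2*b3+a3*b2)) * z +
    ((a0*b2+a1*b1+a2*b0) + (a1*b3+a2*b2+a3*b1)) * z^2 + ((a0*b3+a1*b2+a2*b1+a3*b0) + (a2*b3+a3*b2)) * z^3"
  using assms by algebra

lemma emb_mul: "emb (zmul a b) = emb a * emb b"
  by (cases a; cases b) (simp only: emb.simps zmul.simps zt_ring[OF zt4] of_int_add of_int_mult of_int_diff)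

lemma emb_alt: "emb (a0,a1,a2,a3) = Complex (of_int a0 + of_int a1 * sqrt 3 / 2 + of_int a2 / 2) (of_int a1 / 2 + of_int a2 * sqrt 3 / 2 + of_int a3)"
  by (simp only: emb.simps zt2 zt3) (simp add: complex_eq_iff Re_zt Im_zt)

lemma emb_eq0: "emb a = 0 \<longleftrightarrow> a = (0,0,0,0)"
proof (cases a)
  case (fields a0 a1 a2 a3)
  show ?thesis
  proof
    assume h: "emb a = 0"
    then have "Re (emb a) = 0" "Im (emb a) = 0" by auto
    then have r: "of_int (2*a0 + a2) + of_int a1 * sqrt 3 = 0" and i: "of_int (a1 + 2*a3) + of_int a2 * sqrt 3 = 0"
      using fields by (simp_all only: emb_alt complex.sel)
    from sqrt3_indep[OF r] sqrt3_indep[OF i] show "a = (0,0,0,0)" using fields by simp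
  qed (simp add: fields)
qed

lemma smult3_simp[simp]: "smult3 c (x,y,z) = (c*x, c*y, c*z)" by (simp add: smult3_def)
lemma incid_simp[simp]: "incid (a,b,c) (x,y,z) \<longleftrightarrow> a*x+b*y+c*z = 0" by (simp add: incid_def)
lemma F48_simp[simp]: "F48 (x,y,z) = x^4 + y^4 + x*z^3" by (simp add: F48_def)

lemma restr48_poly: "poly (restr48 (x0,y0,z0) (x1,y1,z1)) t = F48 (x0 + t*x1, y0 + t*y1, z0 + t*z1)"
  by (simp add: restr48_def algebra_simps)

definition c1f :: "pt3 \<Rightarrow> pt3 \<Rightarrow> complex" where
  "c1f p q = (case p of (x0,y0,z0) \<Rightarrow> case q of (x1,y1,z1) \<Rightarrow>
     4*x0^3*x1 + 4*y0^3*y1 + x1*z0^3 + 3*x0*z0^2*z1)"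

lemma restr48_expl: "restr48 (x0,y0,z0) (x1,y1,z1) =
  [: x0^4 + y0^4 + x0*z0^3,
     4*x0^3*x1 + 4*y0^3*y1 + x1*z0^3 + 3*x0*z0^2*z1,
     6*x0^2*x1^2 + 6*y0^2*y1^2 + 3*x0*z0*z1^2 + 3*x1*z0^2*z1,
     4*x0*x1^3 + 4*y0*y1^3 + x0*z1^3 + 3*x1*z0*z1^2,
     x1^4 + y1^4 + x1*z1^3 :]"
proof -
  have "poly (restr48 (x0,y0,z0) (x1,y1,z1)) t = poly [: x0^4 + y0^4 + x0*z0^3,
     4*x0^3*x1 + 4*y0^3*y1 + x1*z0^3 + 3*x0*z0^2*z1,
     6*x0^2*x1^2 + 6*y0^2*y1^2 + 3*x0*z0*z1^2 + 3*x1*z0^2*z1,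
     4*x0*x1^3 + 4*y0*y1^3 + x0*z1^3 + 3*x1*z0*z1^2,
     x1^4 + y1^4 + x1*z1^3 :] t" for t
    unfolding restr48_poly by (simp add: algebra_simps power2_eq_square power3_eq_cube power4_eq_xxxx)
  then show ?thesis by (intro poly_eq_poly_eq_iff[THEN iffD1]) auto
qed

lemma restr48_coeff01: "coeff (restr48 p q) 0 = F48 p \<and> coeff (restr48 p q) 1 = c1f p q"
  by (cases p; cases q) (simp add: restr48_expl c1f_def)

lemma order_ge_coeff: assumes "n \<le> order 0 P" "k < n" shows "coeff P k = 0"
proof -
  have "[:-0,1:]^n dvd P" using assms(1) order_divides by blast
  then have "monom 1 n dvd P" by (simp add: monom_altdef)
  then show ?thesis using assms(2) monom_1_dvd_iff' by blast
qed

lemma coeff_order_ge: assumes "P \<noteq> 0" "\<forall>k<n. coeff P k = 0" shows "n \<le> order 0 P"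
  using assms monom_1_dvd_iff monom_1_dvd_iff' by blast

lemma ex_q: assumes "l \<noteq> (0,0,0)" shows "\<exists>q. incid l q \<and> \<not> (\<exists>c. q = smult3 c p)"
proof -
  obtain a b c where l: "l = (a,b,c)" by (cases l) auto
  obtain x y z where p: "p = (x,y,z)" by (cases p) auto
  show ?thesis
  proof (cases "a = 0")
    case False
    have "\<not> (\<exists>k. (b,-a,0) = smult3 k p) \<or> \<not> (\<exists>k. (c,0,-a) = smult3 k p)"
    proof (rule ccontr)
      assume "\<not> ?thesis"
      then obtain k1 k2 where "(b,-a,0) = smult3 k1 p" "(c,0,-a) = smult3 k2 p" by blast
      then have "b = k1*x" "-a = k1*y" "0 = k1*z" "c = k2*x" "0 = k2*y" "-a = k2*z" by (simp_all add: p)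
      then show False using False by (metis mult_eq_0_iff neg_equal_0_iff_equal)
    qed
    then show ?thesis
    proof
      assume h: "\<not> (\<exists>k. (b,-a,0) = smult3 k p)"
      show ?thesis using h l by (intro exI[of _ "(b,-a,0)"]) (simp add: algebra_simps)
    next
      assume h: "\<not> (\<exists>k. (c,0,-a) = smult3 k p)"
      show ?thesis using h l by (intro exI[of _ "(c,0,-a)"]) (simp add: algebra_simps)
    qed
  next
    case a: True
    show ?thesis
    proof (cases "b = 0")
      case False
      have "\<not> (\<exists>k. (b,0,0) = smult3 k p) \<or> \<not> (\<exists>k. (0,c,-b) = smult3 k p)"
      proof (rule ccontr)
        assume "\<not> ?thesis"
        then obtain k1 k2 where "(b,0,0) = smult3 k1 p" "(0,c,-b) = smult3 k2 p" by blast
        then have "b = k1*x" "0 = k1*y" "0 = k1*z" "0 = k2*x" "c = k2*y" "-b = k2*z" by (simp_all add: p)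
        then show False using False by (metis mult_eq_0_iff neg_equal_0_iff_equal)
      qed
      then show ?thesis
      proof
        assume h: "\<not> (\<exists>k. (b,0,0) = smult3 k p)"
        show ?thesis using h l a by (intro exI[of _ "(b,0,0)"]) (simp add: algebra_simps)
      next
        assume h: "\<not> (\<exists>k. (0,c,-b) = smult3 k p)"
        show ?thesis using h l a by (intro exI[of _ "(0,c,-b)"]) (simp add: algebra_simps)
      qed
    next
      case b: True
      then have c: "c \<noteq> 0" using assms l a by auto
      have "\<not> (\<exists>k. (c,0,0) = smult3 k p) \<or> \<not> (\<exists>k. (0,c,0) = smult3 k p)"
      proof (rule ccontr)
        assume "\<not> ?thesis"
        then obtain k1 k2 where "(c,0,0) = smult3 k1 p" "(0,c,0) = smult3 k2 p" by blast
        then have "c = k1*x" "0 = k1*y" "0 = k1*z" "0 = k2*x" "c = k2*y" "0 = k2*z" by (simp_all add: p)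
        then show False using c by (metis mult_eq_0_iff)
      qed
      then show ?thesis
      proof
        assume h: "\<not> (\<exists>k. (c,0,0) = smult3 k p)"
        show ?thesis using h l a b by (intro exI[of _ "(c,0,0)"]) (simp add: algebra_simps)
      next
        assume h: "\<not> (\<exists>k. (0,c,0) = smult3 k p)"
        show ?thesis using h l a b by (intro exI[of _ "(0,c,0)"]) (simp add: algebra_simps)
      qed
    qed
  qed
qed

definition qsel :: "pt3 \<Rightarrow> pt3 \<Rightarrow> pt3" where
  "qsel l p = (SOME q. incid l q \<and> \<not> (\<exists>c. q = smult3 c p))"

lemma qsel: assumes "l \<noteq> (0,0,0)" shows "incid l (qsel l p) \<and> \<not> (\<exists>c. qsel l p = smult3 c p)"
  unfolding qsel_def using someI_ex[OF ex_q[OF assms]] by blast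

lemma int_mult_qsel: "int_mult l p = order 0 (restr48 p (qsel l p))"
  by (simp add: int_mult_def qsel_def)

lemma im_ge2: assumes "l \<noteq> (0,0,0)" "2 \<le> int_mult l p"
  shows "\<exists>q. incid l q \<and> \<not> (\<exists>c. q = smult3 c p) \<and> F48 p = 0 \<and> c1f p q = 0"
proof -
  let ?q = "qsel l p"
  have o: "2 \<le> order 0 (restr48 p ?q)" using assms(2) int_mult_qsel by simp
  have "coeff (restr48 p ?q) 0 = 0" "coeff (restr48 p ?q) 1 = 0"
    using order_ge_coeff[OF o] by auto
  then show ?thesis using qsel[OF assms(1)] restr48_coeff01 by metis
qed

lemma im_ge2_intro: assumes "l \<noteq> (0,0,0)"
  and "\<And>q. incid l q \<Longrightarrow> \<not> (\<exists>c. q = smult3 c p) \<Longrightarrow> restr48 p q \<noteq> 0 \<and> monom 1 2 dvd restr48 p q"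
  shows "2 \<le> int_mult l p"
proof -
  let ?q = "qsel l p"
  have "restr48 p ?q \<noteq> 0 \<and> monom 1 2 dvd restr48 p ?q" using assms(2) qsel[OF assms(1)] by blast
  then show ?thesis unfolding int_mult_qsel using monom_1_dvd_iff by blast
qed

lemma im_eq4_intro: assumes "l \<noteq> (0,0,0)"
  and "\<And>q. incid l q \<Longrightarrow> \<not> (\<exists>c. q = smult3 c p) \<Longrightarrow> \<exists>c. c \<noteq> 0 \<and> restr48 p q = monom c 4"
  shows "int_mult l p = 4"
proof -
  let ?q = "qsel l p"
  obtain c where "c \<noteq> 0" "restr48 p ?q = monom c 4" using assms(2) qsel[OF assms(1)] by blast
  then show ?thesis unfolding int_mult_qsel by simp
qed

definition hh :: "complex \<Rightarrow> complex \<Rightarrow> complex \<Rightarrow> complex" where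
  "hh \<alpha> \<beta> t = t^4 + \<beta>^3*t^3 + 3*\<alpha>*\<beta>^2*t^2 + 3*\<alpha>^2*\<beta>*t + (1 + \<alpha>^3)"
definition hh' :: "complex \<Rightarrow> complex \<Rightarrow> complex \<Rightarrow> complex" where
  "hh' \<alpha> \<beta> t = 4*t^3 + 3*\<beta>^3*t^2 + 6*\<alpha>*\<beta>^2*t + 3*\<alpha>^2*\<beta>"

lemma tang_c:
  assumes c: "c \<noteq> 0" and p: "p = (x0,y0,z0)" and pnz: "p \<noteq> (0,0,0)"
    and ip: "incid (a,b,c) p" and iq: "incid (a,b,c) q" and nq: "\<not>(\<exists>k. q = smult3 k p)"
    and F: "F48 p = 0" and C1: "c1f p q = 0"
  shows "x0 \<noteq> 0 \<and> hh (-a/c) (-b/c) (y0/x0) = 0 \<and> hh' (-a/c) (-b/c) (y0/x0) = 0"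
proof -
  obtain x1 y1 z1 where q: "q = (x1,y1,z1)" by (cases q) auto
  define \<alpha> where "\<alpha> = -a/c"
  define \<beta> where "\<beta> = -b/c"
  have z0: "z0 = \<alpha>*x0 + \<beta>*y0" using ip c unfolding p \<alpha>_def \<beta>_def
    by (simp add: field_simps) (metis add.commute add_eq_0_iff2 mult.commute)
  have z1: "z1 = \<alpha>*x1 + \<beta>*y1" using iq c unfolding q \<alpha>_def \<beta>_def
    by (simp add: field_simps) (metis add.commute add_eq_0_iff2 mult.commute)
  define gx where "gx = 4*x0^3 + z0^3 + 3*\<alpha>*x0*z0^2"
  define gy where "gy = 4*y0^3 + 3*\<beta>*x0*z0^2"
  have e1: "gx*x1 + gy*y1 = 0"
  proof -
    have "c1f p q = gx*x1 + gy*y1" unfolding c1f_def p q gx_def gy_def z1 by (simp add: algebra_simps)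
    then show ?thesis using C1 by simp
  qed
  have e2: "gx*x0 + gy*y0 = 0"
  proof -
    have "4 * F48 p = gx*x0 + gy*y0" unfolding p gx_def gy_def F48_simp z0 by (simp add: algebra_simps power2_eq_square power3_eq_cube power4_eq_xxxx)
    then show ?thesis using F by simp
  qed
  have det: "x0*y1 - x1*y0 \<noteq> 0"
  proof
    assume d: "x0*y1 - x1*y0 = 0"
    show False
    proof (cases "x0 = 0")
      case False
      have "q = smult3 (x1/x0) p" unfolding p q using d False
        by (simp add: z0 z1 field_simps)
      then show False using nq by blast
    next
      case True
      then have y0: "y0 \<noteq> 0" using pnz p z0 by auto
      then have "x1 = 0" using d True by simp
      then have "q = smult3 (y1/y0) p" unfolding p q using True y0 by (simp add: z0 z1 field_simps)
      then show False using nq by blast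
    qed
  qed
  have gy0: "gy = 0"
  proof -
    have "gy*(x0*y1 - x1*y0) = x0*(gx*x1 + gy*y1) - x1*(gx*x0 + gy*y0)" by (simp add: algebra_simps)
    then show ?thesis using e1 e2 det by simp
  qed
  have x0: "x0 \<noteq> 0"
  proof
    assume x0: "x0 = 0"
    then have "y0^4 = 0" using F p by simp
    then have "y0 = 0" by simp
    then show False using x0 pnz p z0 by simp
  qed
  have "x0^4 * hh \<alpha> \<beta> (y0/x0) = F48 p"
    unfolding p F48_simp z0 hh_def using x0 by (simp add: field_simps power2_eq_square power3_eq_cube power4_eq_xxxx)
  then have h1: "hh \<alpha> \<beta> (y0/x0) = 0" using F x0 by simp
  have "x0^3 * hh' \<alpha> \<beta> (y0/x0) = gy"
    unfolding gy_def z0 hh'_def using x0 by (simp add: field_simps power2_eq_square power3_eq_cube)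
  then have h2: "hh' \<alpha> \<beta> (y0/x0) = 0" using gy0 x0 by simp
  show ?thesis using x0 h1 h2 \<alpha>_def \<beta>_def by simp
qed

lemma two_roots:
  assumes h1: "hh \<alpha> \<beta> t1 = 0" and h1': "hh' \<alpha> \<beta> t1 = 0"
    and h2: "hh \<alpha> \<beta> t2 = 0" and h2': "hh' \<alpha> \<beta> t2 = 0" and ne: "t1 \<noteq> t2"
  shows "\<beta>^3 = -2*(t1+t2) \<and> 3*\<alpha>*\<beta>^2 = (t1+t2)^2 + 2*(t1*t2) \<and> 3*\<alpha>^2*\<beta> = -2*(t1+t2)*(t1*t2)
         \<and> 1 + \<alpha>^3 = (t1*t2)^2"
proof -
  define \<sigma> where "\<sigma> = t1 + t2"
  define \<pi> where "\<pi> = t1*t2"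
  define d3 where "d3 = \<beta>^3 + 2*\<sigma>"
  define d2 where "d2 = 3*\<alpha>*\<beta>^2 - \<sigma>^2 - 2*\<pi>"
  define d1 where "d1 = 3*\<alpha>^2*\<beta> + 2*\<sigma>*\<pi>"
  define d0 where "d0 = 1 + \<alpha>^3 - \<pi>^2"
  have D: "hh \<alpha> \<beta> t = (t-t1)^2*(t-t2)^2 + d3*t^3 + d2*t^2 + d1*t + d0" for t
    unfolding hh_def d3_def d2_def d1_def d0_def \<sigma>_def \<pi>_def by (simp add: algebra_simps power2_eq_square power3_eq_cube power4_eq_xxxx)
  have D': "hh' \<alpha> \<beta> t = 2*(t-t1)*(t-t2)^2 + 2*(t-t1)^2*(t-t2) + 3*d3*t^2 + 2*d2*t + d1" for t
    unfolding hh'_def d3_def d2_def d1_def d0_def \<sigma>_def \<pi>_def by (simp add: algebra_simps power2_eq_square power3_eq_cube)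
  have a1: "d3*t1^3 + d2*t1^2 + d1*t1 + d0 = 0" using D[of t1] h1 by simp
  have a2: "3*d3*t1^2 + 2*d2*t1 + d1 = 0" using D'[of t1] h1' by simp
  have a3: "d3*t2^3 + d2*t2^2 + d1*t2 + d0 = 0" using D[of t2] h2 by simp
  have a4: "3*d3*t2^2 + 2*d2*t2 + d1 = 0" using D'[of t2] h2' by simp
  define \<delta> where "\<delta> = t2 - t1"
  have dnz: "\<delta> \<noteq> 0" using ne \<delta>_def by simp
  define e2 where "e2 = 3*d3*t1 + d2"
  have tay: "d3*t2^3 + d2*t2^2 + d1*t2 + d0 = (d3*t1^3 + d2*t1^2 + d1*t1 + d0) + (3*d3*t1^2 + 2*d2*t1 + d1)*\<delta> + e2*\<delta>^2 + d3*\<delta>^3"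
    unfolding e2_def \<delta>_def by (simp add: algebra_simps power2_eq_square power3_eq_cube)
  have tay': "3*d3*t2^2 + 2*d2*t2 + d1 = (3*d3*t1^2 + 2*d2*t1 + d1) + 2*e2*\<delta> + 3*d3*\<delta>^2"
    unfolding e2_def \<delta>_def by (simp add: algebra_simps power2_eq_square)
  have "e2*\<delta>^2 + d3*\<delta>^3 = 0" using tay unfolding a1 a2 a3 by simp
  then have b1: "\<delta>^2 * (e2 + d3*\<delta>) = 0" by (simp add: algebra_simps power2_eq_square power3_eq_cube)
  have "2*e2*\<delta> + 3*d3*\<delta>^2 = 0" using tay' unfolding a2 a4 by simp
  then have b2: "\<delta> * (2*e2 + 3*d3*\<delta>) = 0" by (simp add: algebra_simps power2_eq_square)
  have c1: "e2 + d3*\<delta> = 0" using b1 dnz by simp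
  have c2: "2*e2 + 3*d3*\<delta> = 0" using b2 dnz by simp
  have "d3 * \<delta> = (2*e2 + 3*d3*\<delta>) - 2*(e2 + d3*\<delta>)" by (simp add: algebra_simps)
  then have "d3 * \<delta> = 0" using c1 c2 by simp
  then have z3: "d3 = 0" using dnz by simp
  then have z2: "d2 = 0" using c1 e2_def by simp
  then have z1: "d1 = 0" using a2 z3 by simp
  then have z0: "d0 = 0" using a1 z2 z3 by simp
  show ?thesis using z0 z1 z2 z3 unfolding d3_def d2_def d1_def d0_def \<sigma>_def \<pi>_def
    by algebra
qed

fun zpow :: "zz \<Rightarrow> nat \<Rightarrow> zz" where
  "zpow a 0 = (1,0,0,0)" | "zpow a (Suc n) = zmul a (zpow a n)"
lemma zpow_numeral[simp]: "zpow a (numeral n) = zmul a (zpow a (pred_numeral n))"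
  by (simp add: numeral_eq_Suc)
fun zneg :: "zz \<Rightarrow> zz" where "zneg (a0,a1,a2,a3) = (-a0,-a1,-a2,-a3)"
definition "ztz = ((0,1,0,0)::zz)"
definition "omz = zpow ztz 4"
definition "k1z = ((-1,2,0,-1)::zz)"
definition "k2z = ((-1,-2,0,1)::zz)"
definition "cz = ((0,1,1,0)::zz)"
definition R :: "nat \<Rightarrow> zz \<times> zz" where
 "R i = (if i < 12 then (zmul k1z (zpow omz i), zpow ztz i)
   else if i < 24 then (zmul k2z (zpow omz (i-12)), zmul cz (zpow ztz (i-12)))
   else (zneg (zpow omz (i-24)), (0,0,0,0)))"
fun zcol :: "zz\<times>zz \<Rightarrow> zz\<times>zz \<Rightarrow> zz\<times>zz \<Rightarrow> zz" where
 "zcol (a0,b0) (a1,b1) (a2,b2) = zsub (zmul (zsub a1 a0) (zsub b2 b0)) (zmul (zsub a2 a0) (zsub b1 b0))"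
definition zzT :: "nat \<Rightarrow> nat \<Rightarrow> nat \<Rightarrow> bool" where
 "zzT a b c = (if c = 27 then zsub (snd (R b)) (snd (R a)) = (0,0,0,0) else zcol (R a) (R b) (R c) = (0,0,0,0))"
lemma R_0: "R 0 = ((-1,2,0,-1),(1,0,0,0))" by (simp add: R_def ztz_def omz_def k1z_def k2z_def cz_def)
lemma R_1: "R 1 = ((1,-1,-1,2),(0,1,0,0))" by (simp add: R_def ztz_def omz_def k1z_def k2z_def cz_def)
lemma R_2: "R 2 = ((0,-1,1,-1),(0,0,1,0))" by (simp add: R_def ztz_def omz_def k1z_def k2z_def cz_def)
lemma R_3: "R 3 = ((-1,2,0,-1),(0,0,0,1))" by (simp add: R_def ztz_def omz_def k1z_def k2z_def cz_def)
lemma R_4: "R 4 = ((1,-1,-1,2),(-1,0,1,0))" by (simp add: R_def ztz_def omz_def k1z_def k2z_def cz_def)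
lemma R_5: "R 5 = ((0,-1,1,-1),(0,-1,0,1))" by (simp add: R_def ztz_def omz_def k1z_def k2z_def cz_def)
lemma R_6: "R 6 = ((-1,2,0,-1),(-1,0,0,0))" by (simp add: R_def ztz_def omz_def k1z_def k2z_def cz_def)
lemma R_7: "R 7 = ((1,-1,-1,2),(0,-1,0,0))" by (simp add: R_def ztz_def omz_def k1z_def k2z_def cz_def)
lemma R_8: "R 8 = ((0,-1,1,-1),(0,0,-1,0))" by (simp add: R_def ztz_def omz_def k1z_def k2z_def cz_def)
lemma R_9: "R 9 = ((-1,2,0,-1),(0,0,0,-1))" by (simp add: R_def ztz_def omz_def k1z_def k2z_def cz_def)
lemma R_10: "R 10 = ((1,-1,-1,2),(1,0,-1,0))" by (simp add: R_def ztz_def omz_def k1z_def k2z_def cz_def)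
lemma R_11: "R 11 = ((0,-1,1,-1),(0,1,0,-1))" by (simp add: R_def ztz_def omz_def k1z_def k2z_def cz_def)
lemma R_12: "R 12 = ((-1,-2,0,1),(0,1,1,0))" by (simp add: R_def ztz_def omz_def k1z_def k2z_def cz_def)
lemma R_13: "R 13 = ((1,1,-1,-2),(0,0,1,1))" by (simp add: R_def ztz_def omz_def k1z_def k2z_def cz_def)
lemma R_14: "R 14 = ((0,1,1,1),(-1,0,1,1))" by (simp add: R_def ztz_def omz_def k1z_def k2z_def cz_def)
lemma R_15: "R 15 = ((-1,-2,0,1),(-1,-1,1,1))" by (simp add: R_def ztz_def omz_def k1z_def k2z_def cz_def)
lemma R_16: "R 16 = ((1,1,-1,-2),(-1,-1,0,1))" by (simp add: R_def ztz_def omz_def k1z_def k2z_def cz_def)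
lemma R_17: "R 17 = ((0,1,1,1),(-1,-1,0,0))" by (simp add: R_def ztz_def omz_def k1z_def k2z_def cz_def)
lemma R_18: "R 18 = ((-1,-2,0,1),(0,-1,-1,0))" by (simp add: R_def ztz_def omz_def k1z_def k2z_def cz_def)
lemma R_19: "R 19 = ((1,1,-1,-2),(0,0,-1,-1))" by (simp add: R_def ztz_def omz_def k1z_def k2z_def cz_def)
lemma R_20: "R 20 = ((0,1,1,1),(1,0,-1,-1))" by (simp add: R_def ztz_def omz_def k1z_def k2z_def cz_def)
lemma R_21: "R 21 = ((-1,-2,0,1),(1,1,-1,-1))" by (simp add: R_def ztz_def omz_def k1z_def k2z_def cz_def)
lemma R_22: "R 22 = ((1,1,-1,-2),(1,1,0,-1))" by (simp add: R_def ztz_def omz_def k1z_def k2z_def cz_def)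
lemma R_23: "R 23 = ((0,1,1,1),(1,1,0,0))" by (simp add: R_def ztz_def omz_def k1z_def k2z_def cz_def)
lemma R_24: "R 24 = ((-1,0,0,0),(0,0,0,0))" by (simp add: R_def ztz_def omz_def k1z_def k2z_def cz_def)
lemma R_25: "R 25 = ((1,0,-1,0),(0,0,0,0))" by (simp add: R_def ztz_def omz_def k1z_def k2z_def cz_def)
lemma R_26: "R 26 = ((0,0,1,0),(0,0,0,0))" by (simp add: R_def ztz_def omz_def k1z_def k2z_def cz_def)
lemma R_1s: "R (Suc 0) = R 1" by simp
lemmas R_simps = R_0 R_1 R_2 R_3 R_4 R_5 R_6 R_7 R_8 R_9 R_10 R_11 R_12 R_13 R_14 R_15 R_16 R_17 R_18 R_19 R_20 R_21 R_22 R_23 R_24 R_25 R_26 R_1s[unfolded R_1]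
definition Bt :: "nat list list list" where "Bt = [[[],[0,1,23],[0,2],[0,3,6,9],[0,4,8],[0,5],[0,3,6,9],[0,7],[0,4,8],[0,3,6,9],[0,10],[0,11,22],[0,12],[0,13,20],[0,14],[0,15],[0,16],[0,17],[0,18],[0,19],[0,13,20],[0,21],[0,11,22],[0,1,23],[0,24],[0,25],[0,26],[0,27]],
 [[],[],[1,2,12],[1,3],[1,4,7,10],[1,5,9],[1,6],[1,4,7,10],[1,8],[1,5,9],[1,4,7,10],[1,11],[1,2,12],[1,13],[1,14,21],[1,15],[1,16],[1,17],[1,18],[1,19],[1,20],[1,14,21],[1,22],[0,1,23],[1,24],[1,25],[1,26],[1,27]],
 [[],[],[],[2,3,13],[2,4],[2,5,8,11],[2,6,10],[2,7],[2,5,8,11],[2,9],[2,6,10],[2,5,8,11],[1,2,12],[2,3,13],[2,14],[2,15,22],[2,16],[2,17],[2,18],[2,19],[2,20],[2,21],[2,15,22],[2,23],[2,24],[2,25],[2,26],[2,27]],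
 [[],[],[],[],[3,4,14],[3,5],[0,3,6,9],[3,7,11],[3,8],[0,3,6,9],[3,10],[3,7,11],[3,12],[2,3,13],[3,4,14],[3,15],[3,16,23],[3,17],[3,18],[3,19],[3,20],[3,21],[3,22],[3,16,23],[3,24],[3,25],[3,26],[3,27]],
 [[],[],[],[],[],[4,5,15],[4,6],[1,4,7,10],[0,4,8],[4,9],[1,4,7,10],[4,11],[4,12,17],[4,13],[3,4,14],[4,5,15],[4,16],[4,12,17],[4,18],[4,19],[4,20],[4,21],[4,22],[4,23],[4,24],[4,25],[4,26],[4,27]],
 [[],[],[],[],[],[],[5,6,16],[5,7],[2,5,8,11],[1,5,9],[5,10],[2,5,8,11],[5,12],[5,13,18],[5,14],[4,5,15],[5,6,16],[5,17],[5,13,18],[5,19],[5,20],[5,21],[5,22],[5,23],[5,24],[5,25],[5,26],[5,27]],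
 [[],[],[],[],[],[],[],[6,7,17],[6,8],[0,3,6,9],[2,6,10],[6,11],[6,12],[6,13],[6,14,19],[6,15],[5,6,16],[6,7,17],[6,18],[6,14,19],[6,20],[6,21],[6,22],[6,23],[6,24],[6,25],[6,26],[6,27]],
 [[],[],[],[],[],[],[],[],[7,8,18],[7,9],[1,4,7,10],[3,7,11],[7,12],[7,13],[7,14],[7,15,20],[7,16],[6,7,17],[7,8,18],[7,19],[7,15,20],[7,21],[7,22],[7,23],[7,24],[7,25],[7,26],[7,27]],
 [[],[],[],[],[],[],[],[],[],[8,9,19],[8,10],[2,5,8,11],[8,12],[8,13],[8,14],[8,15],[8,16,21],[8,17],[7,8,18],[8,9,19],[8,20],[8,16,21],[8,22],[8,23],[8,24],[8,25],[8,26],[8,27]],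
 [[],[],[],[],[],[],[],[],[],[],[9,10,20],[9,11],[9,12],[9,13],[9,14],[9,15],[9,16],[9,17,22],[9,18],[8,9,19],[9,10,20],[9,21],[9,17,22],[9,23],[9,24],[9,25],[9,26],[9,27]],
 [[],[],[],[],[],[],[],[],[],[],[],[10,11,21],[10,12],[10,13],[10,14],[10,15],[10,16],[10,17],[10,18,23],[10,19],[9,10,20],[10,11,21],[10,22],[10,18,23],[10,24],[10,25],[10,26],[10,27]],
 [[],[],[],[],[],[],[],[],[],[],[],[],[11,12,19],[11,13],[11,14],[11,15],[11,16],[11,17],[11,18],[11,12,19],[11,20],[10,11,21],[0,11,22],[11,23],[11,24],[11,25],[11,26],[11,27]],
 [[],[],[],[],[],[],[],[],[],[],[],[],[],[12,13],[12,14],[12,15,18,21],[12,16,20],[4,12,17],[12,15,18,21],[11,12,19],[12,16,20],[12,15,18,21],[12,22],[12,23],[12,24],[12,25],[12,26],[12,27]],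
 [[],[],[],[],[],[],[],[],[],[],[],[],[],[],[13,14],[13,15],[13,16,19,22],[13,17,21],[5,13,18],[13,16,19,22],[0,13,20],[13,17,21],[13,16,19,22],[13,23],[13,24],[13,25],[13,26],[13,27]],
 [[],[],[],[],[],[],[],[],[],[],[],[],[],[],[],[14,15],[14,16],[14,17,20,23],[14,18,22],[6,14,19],[14,17,20,23],[1,14,21],[14,18,22],[14,17,20,23],[14,24],[14,25],[14,26],[14,27]],
 [[],[],[],[],[],[],[],[],[],[],[],[],[],[],[],[],[15,16],[15,17],[12,15,18,21],[15,19,23],[7,15,20],[12,15,18,21],[2,15,22],[15,19,23],[15,24],[15,25],[15,26],[15,27]],
 [[],[],[],[],[],[],[],[],[],[],[],[],[],[],[],[],[],[16,17],[16,18],[13,16,19,22],[12,16,20],[8,16,21],[13,16,19,22],[3,16,23],[16,24],[16,25],[16,26],[16,27]],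
 [[],[],[],[],[],[],[],[],[],[],[],[],[],[],[],[],[],[],[17,18],[17,19],[14,17,20,23],[13,17,21],[9,17,22],[14,17,20,23],[17,24],[17,25],[17,26],[17,27]],
 [[],[],[],[],[],[],[],[],[],[],[],[],[],[],[],[],[],[],[],[18,19],[18,20],[12,15,18,21],[14,18,22],[10,18,23],[18,24],[18,25],[18,26],[18,27]],
 [[],[],[],[],[],[],[],[],[],[],[],[],[],[],[],[],[],[],[],[],[19,20],[19,21],[13,16,19,22],[15,19,23],[19,24],[19,25],[19,26],[19,27]],
 [[],[],[],[],[],[],[],[],[],[],[],[],[],[],[],[],[],[],[],[],[],[20,21],[20,22],[14,17,20,23],[20,24],[20,25],[20,26],[20,27]],
 [[],[],[],[],[],[],[],[],[],[],[],[],[],[],[],[],[],[],[],[],[],[],[21,22],[21,23],[21,24],[21,25],[21,26],[21,27]],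
 [[],[],[],[],[],[],[],[],[],[],[],[],[],[],[],[],[],[],[],[],[],[],[],[22,23],[22,24],[22,25],[22,26],[22,27]],
 [[],[],[],[],[],[],[],[],[],[],[],[],[],[],[],[],[],[],[],[],[],[],[],[],[23,24],[23,25],[23,26],[23,27]],
 [[],[],[],[],[],[],[],[],[],[],[],[],[],[],[],[],[],[],[],[],[],[],[],[],[],[24,25,26,27],[24,25,26,27],[24,25,26,27]],
 [[],[],[],[],[],[],[],[],[],[],[],[],[],[],[],[],[],[],[],[],[],[],[],[],[],[],[24,25,26,27],[24,25,26,27]],
 [[],[],[],[],[],[],[],[],[],[],[],[],[],[],[],[],[],[],[],[],[],[],[],[],[],[],[],[24,25,26,27]],
 [[],[],[],[],[],[],[],[],[],[],[],[],[],[],[],[],[],[],[],[],[],[],[],[],[],[],[],[]]]"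
definition B :: "nat \<Rightarrow> nat \<Rightarrow> nat list" where "B a b = Bt ! a ! b"
lemma B_0_1: "B 0 1 = [0,1,23]" by (simp add: B_def Bt_def)
lemma B_0_2: "B 0 2 = [0,2]" by (simp add: B_def Bt_def)
lemma B_0_3: "B 0 3 = [0,3,6,9]" by (simp add: B_def Bt_def)
lemma B_0_4: "B 0 4 = [0,4,8]" by (simp add: B_def Bt_def)
lemma B_0_5: "B 0 5 = [0,5]" by (simp add: B_def Bt_def)
lemma B_0_6: "B 0 6 = [0,3,6,9]" by (simp add: B_def Bt_def)
lemma B_0_7: "B 0 7 = [0,7]" by (simp add: B_def Bt_def)
lemma B_0_8: "B 0 8 = [0,4,8]" by (simp add: B_def Bt_def)
lemma B_0_9: "B 0 9 = [0,3,6,9]" by (simp add: B_def Bt_def)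
lemma B_0_10: "B 0 10 = [0,10]" by (simp add: B_def Bt_def)
lemma B_0_11: "B 0 11 = [0,11,22]" by (simp add: B_def Bt_def)
lemma B_0_12: "B 0 12 = [0,12]" by (simp add: B_def Bt_def)
lemma B_0_13: "B 0 13 = [0,13,20]" by (simp add: B_def Bt_def)
lemma B_0_14: "B 0 14 = [0,14]" by (simp add: B_def Bt_def)
lemma B_0_15: "B 0 15 = [0,15]" by (simp add: B_def Bt_def)
lemma B_0_16: "B 0 16 = [0,16]" by (simp add: B_def Bt_def)
lemma B_0_17: "B 0 17 = [0,17]" by (simp add: B_def Bt_def)
lemma B_0_18: "B 0 18 = [0,18]" by (simp add: B_def Bt_def)
lemma B_0_19: "B 0 19 = [0,19]" by (simp add: B_def Bt_def)
lemma B_0_20: "B 0 20 = [0,13,20]" by (simp add: B_def Bt_def)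
lemma B_0_21: "B 0 21 = [0,21]" by (simp add: B_def Bt_def)
lemma B_0_22: "B 0 22 = [0,11,22]" by (simp add: B_def Bt_def)
lemma B_0_23: "B 0 23 = [0,1,23]" by (simp add: B_def Bt_def)
lemma B_0_24: "B 0 24 = [0,24]" by (simp add: B_def Bt_def)
lemma B_0_25: "B 0 25 = [0,25]" by (simp add: B_def Bt_def)
lemma B_0_26: "B 0 26 = [0,26]" by (simp add: B_def Bt_def)
lemma B_0_27: "B 0 27 = [0,27]" by (simp add: B_def Bt_def)
lemma B_1_2: "B 1 2 = [1,2,12]" by (simp add: B_def Bt_def)
lemma B_1_3: "B 1 3 = [1,3]" by (simp add: B_def Bt_def)
lemma B_1_4: "B 1 4 = [1,4,7,10]" by (simp add: B_def Bt_def)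
lemma B_1_5: "B 1 5 = [1,5,9]" by (simp add: B_def Bt_def)
lemma B_1_6: "B 1 6 = [1,6]" by (simp add: B_def Bt_def)
lemma B_1_7: "B 1 7 = [1,4,7,10]" by (simp add: B_def Bt_def)
lemma B_1_8: "B 1 8 = [1,8]" by (simp add: B_def Bt_def)
lemma B_1_9: "B 1 9 = [1,5,9]" by (simp add: B_def Bt_def)
lemma B_1_10: "B 1 10 = [1,4,7,10]" by (simp add: B_def Bt_def)
lemma B_1_11: "B 1 11 = [1,11]" by (simp add: B_def Bt_def)
lemma B_1_12: "B 1 12 = [1,2,12]" by (simp add: B_def Bt_def)
lemma B_1_13: "B 1 13 = [1,13]" by (simp add: B_def Bt_def)
lemma B_1_14: "B 1 14 = [1,14,21]" by (simp add: B_def Bt_def)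
lemma B_1_15: "B 1 15 = [1,15]" by (simp add: B_def Bt_def)
lemma B_1_16: "B 1 16 = [1,16]" by (simp add: B_def Bt_def)
lemma B_1_17: "B 1 17 = [1,17]" by (simp add: B_def Bt_def)
lemma B_1_18: "B 1 18 = [1,18]" by (simp add: B_def Bt_def)
lemma B_1_19: "B 1 19 = [1,19]" by (simp add: B_def Bt_def)
lemma B_1_20: "B 1 20 = [1,20]" by (simp add: B_def Bt_def)
lemma B_1_21: "B 1 21 = [1,14,21]" by (simp add: B_def Bt_def)
lemma B_1_22: "B 1 22 = [1,22]" by (simp add: B_def Bt_def)
lemma B_1_23: "B 1 23 = [0,1,23]" by (simp add: B_def Bt_def)
lemma B_1_24: "B 1 24 = [1,24]" by (simp add: B_def Bt_def)
lemma B_1_25: "B 1 25 = [1,25]" by (simp add: B_def Bt_def)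
lemma B_1_26: "B 1 26 = [1,26]" by (simp add: B_def Bt_def)
lemma B_1_27: "B 1 27 = [1,27]" by (simp add: B_def Bt_def)
lemma B_2_3: "B 2 3 = [2,3,13]" by (simp add: B_def Bt_def)
lemma B_2_4: "B 2 4 = [2,4]" by (simp add: B_def Bt_def)
lemma B_2_5: "B 2 5 = [2,5,8,11]" by (simp add: B_def Bt_def)
lemma B_2_6: "B 2 6 = [2,6,10]" by (simp add: B_def Bt_def)
lemma B_2_7: "B 2 7 = [2,7]" by (simp add: B_def Bt_def)
lemma B_2_8: "B 2 8 = [2,5,8,11]" by (simp add: B_def Bt_def)
lemma B_2_9: "B 2 9 = [2,9]" by (simp add: B_def Bt_def)
lemma B_2_10: "B 2 10 = [2,6,10]" by (simp add: B_def Bt_def)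
lemma B_2_11: "B 2 11 = [2,5,8,11]" by (simp add: B_def Bt_def)
lemma B_2_12: "B 2 12 = [1,2,12]" by (simp add: B_def Bt_def)
lemma B_2_13: "B 2 13 = [2,3,13]" by (simp add: B_def Bt_def)
lemma B_2_14: "B 2 14 = [2,14]" by (simp add: B_def Bt_def)
lemma B_2_15: "B 2 15 = [2,15,22]" by (simp add: B_def Bt_def)
lemma B_2_16: "B 2 16 = [2,16]" by (simp add: B_def Bt_def)
lemma B_2_17: "B 2 17 = [2,17]" by (simp add: B_def Bt_def)
lemma B_2_18: "B 2 18 = [2,18]" by (simp add: B_def Bt_def)
lemma B_2_19: "B 2 19 = [2,19]" by (simp add: B_def Bt_def)
lemma B_2_20: "B 2 20 = [2,20]" by (simp add: B_def Bt_def)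
lemma B_2_21: "B 2 21 = [2,21]" by (simp add: B_def Bt_def)
lemma B_2_22: "B 2 22 = [2,15,22]" by (simp add: B_def Bt_def)
lemma B_2_23: "B 2 23 = [2,23]" by (simp add: B_def Bt_def)
lemma B_2_24: "B 2 24 = [2,24]" by (simp add: B_def Bt_def)
lemma B_2_25: "B 2 25 = [2,25]" by (simp add: B_def Bt_def)
lemma B_2_26: "B 2 26 = [2,26]" by (simp add: B_def Bt_def)
lemma B_2_27: "B 2 27 = [2,27]" by (simp add: B_def Bt_def)
lemma B_3_4: "B 3 4 = [3,4,14]" by (simp add: B_def Bt_def)
lemma B_3_5: "B 3 5 = [3,5]" by (simp add: B_def Bt_def)
lemma B_3_6: "B 3 6 = [0,3,6,9]" by (simp add: B_def Bt_def)
lemma B_3_7: "B 3 7 = [3,7,11]" by (simp add: B_def Bt_def)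
lemma B_3_8: "B 3 8 = [3,8]" by (simp add: B_def Bt_def)
lemma B_3_9: "B 3 9 = [0,3,6,9]" by (simp add: B_def Bt_def)
lemma B_3_10: "B 3 10 = [3,10]" by (simp add: B_def Bt_def)
lemma B_3_11: "B 3 11 = [3,7,11]" by (simp add: B_def Bt_def)
lemma B_3_12: "B 3 12 = [3,12]" by (simp add: B_def Bt_def)
lemma B_3_13: "B 3 13 = [2,3,13]" by (simp add: B_def Bt_def)
lemma B_3_14: "B 3 14 = [3,4,14]" by (simp add: B_def Bt_def)
lemma B_3_15: "B 3 15 = [3,15]" by (simp add: B_def Bt_def)
lemma B_3_16: "B 3 16 = [3,16,23]" by (simp add: B_def Bt_def)
lemma B_3_17: "B 3 17 = [3,17]" by (simp add: B_def Bt_def)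
lemma B_3_18: "B 3 18 = [3,18]" by (simp add: B_def Bt_def)
lemma B_3_19: "B 3 19 = [3,19]" by (simp add: B_def Bt_def)
lemma B_3_20: "B 3 20 = [3,20]" by (simp add: B_def Bt_def)
lemma B_3_21: "B 3 21 = [3,21]" by (simp add: B_def Bt_def)
lemma B_3_22: "B 3 22 = [3,22]" by (simp add: B_def Bt_def)
lemma B_3_23: "B 3 23 = [3,16,23]" by (simp add: B_def Bt_def)
lemma B_3_24: "B 3 24 = [3,24]" by (simp add: B_def Bt_def)
lemma B_3_25: "B 3 25 = [3,25]" by (simp add: B_def Bt_def)
lemma B_3_26: "B 3 26 = [3,26]" by (simp add: B_def Bt_def)
lemma B_3_27: "B 3 27 = [3,27]" by (simp add: B_def Bt_def)
lemma B_4_5: "B 4 5 = [4,5,15]" by (simp add: B_def Bt_def)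
lemma B_4_6: "B 4 6 = [4,6]" by (simp add: B_def Bt_def)
lemma B_4_7: "B 4 7 = [1,4,7,10]" by (simp add: B_def Bt_def)
lemma B_4_8: "B 4 8 = [0,4,8]" by (simp add: B_def Bt_def)
lemma B_4_9: "B 4 9 = [4,9]" by (simp add: B_def Bt_def)
lemma B_4_10: "B 4 10 = [1,4,7,10]" by (simp add: B_def Bt_def)
lemma B_4_11: "B 4 11 = [4,11]" by (simp add: B_def Bt_def)
lemma B_4_12: "B 4 12 = [4,12,17]" by (simp add: B_def Bt_def)
lemma B_4_13: "B 4 13 = [4,13]" by (simp add: B_def Bt_def)
lemma B_4_14: "B 4 14 = [3,4,14]" by (simp add: B_def Bt_def)
lemma B_4_15: "B 4 15 = [4,5,15]" by (simp add: B_def Bt_def)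
lemma B_4_16: "B 4 16 = [4,16]" by (simp add: B_def Bt_def)
lemma B_4_17: "B 4 17 = [4,12,17]" by (simp add: B_def Bt_def)
lemma B_4_18: "B 4 18 = [4,18]" by (simp add: B_def Bt_def)
lemma B_4_19: "B 4 19 = [4,19]" by (simp add: B_def Bt_def)
lemma B_4_20: "B 4 20 = [4,20]" by (simp add: B_def Bt_def)
lemma B_4_21: "B 4 21 = [4,21]" by (simp add: B_def Bt_def)
lemma B_4_22: "B 4 22 = [4,22]" by (simp add: B_def Bt_def)
lemma B_4_23: "B 4 23 = [4,23]" by (simp add: B_def Bt_def)
lemma B_4_24: "B 4 24 = [4,24]" by (simp add: B_def Bt_def)
lemma B_4_25: "B 4 25 = [4,25]" by (simp add: B_def Bt_def)
lemma B_4_26: "B 4 26 = [4,26]" by (simp add: B_def Bt_def)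
lemma B_4_27: "B 4 27 = [4,27]" by (simp add: B_def Bt_def)
lemma B_5_6: "B 5 6 = [5,6,16]" by (simp add: B_def Bt_def)
lemma B_5_7: "B 5 7 = [5,7]" by (simp add: B_def Bt_def)
lemma B_5_8: "B 5 8 = [2,5,8,11]" by (simp add: B_def Bt_def)
lemma B_5_9: "B 5 9 = [1,5,9]" by (simp add: B_def Bt_def)
lemma B_5_10: "B 5 10 = [5,10]" by (simp add: B_def Bt_def)
lemma B_5_11: "B 5 11 = [2,5,8,11]" by (simp add: B_def Bt_def)
lemma B_5_12: "B 5 12 = [5,12]" by (simp add: B_def Bt_def)
lemma B_5_13: "B 5 13 = [5,13,18]" by (simp add: B_def Bt_def)
lemma B_5_14: "B 5 14 = [5,14]" by (simp add: B_def Bt_def)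
lemma B_5_15: "B 5 15 = [4,5,15]" by (simp add: B_def Bt_def)
lemma B_5_16: "B 5 16 = [5,6,16]" by (simp add: B_def Bt_def)
lemma B_5_17: "B 5 17 = [5,17]" by (simp add: B_def Bt_def)
lemma B_5_18: "B 5 18 = [5,13,18]" by (simp add: B_def Bt_def)
lemma B_5_19: "B 5 19 = [5,19]" by (simp add: B_def Bt_def)
lemma B_5_20: "B 5 20 = [5,20]" by (simp add: B_def Bt_def)
lemma B_5_21: "B 5 21 = [5,21]" by (simp add: B_def Bt_def)
lemma B_5_22: "B 5 22 = [5,22]" by (simp add: B_def Bt_def)
lemma B_5_23: "B 5 23 = [5,23]" by (simp add: B_def Bt_def)
lemma B_5_24: "B 5 24 = [5,24]" by (simp add: B_def Bt_def)
lemma B_5_25: "B 5 25 = [5,25]" by (simp add: B_def Bt_def)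
lemma B_5_26: "B 5 26 = [5,26]" by (simp add: B_def Bt_def)
lemma B_5_27: "B 5 27 = [5,27]" by (simp add: B_def Bt_def)
lemma B_6_7: "B 6 7 = [6,7,17]" by (simp add: B_def Bt_def)
lemma B_6_8: "B 6 8 = [6,8]" by (simp add: B_def Bt_def)
lemma B_6_9: "B 6 9 = [0,3,6,9]" by (simp add: B_def Bt_def)
lemma B_6_10: "B 6 10 = [2,6,10]" by (simp add: B_def Bt_def)
lemma B_6_11: "B 6 11 = [6,11]" by (simp add: B_def Bt_def)
lemma B_6_12: "B 6 12 = [6,12]" by (simp add: B_def Bt_def)
lemma B_6_13: "B 6 13 = [6,13]" by (simp add: B_def Bt_def)
lemma B_6_14: "B 6 14 = [6,14,19]" by (simp add: B_def Bt_def)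
lemma B_6_15: "B 6 15 = [6,15]" by (simp add: B_def Bt_def)
lemma B_6_16: "B 6 16 = [5,6,16]" by (simp add: B_def Bt_def)
lemma B_6_17: "B 6 17 = [6,7,17]" by (simp add: B_def Bt_def)
lemma B_6_18: "B 6 18 = [6,18]" by (simp add: B_def Bt_def)
lemma B_6_19: "B 6 19 = [6,14,19]" by (simp add: B_def Bt_def)
lemma B_6_20: "B 6 20 = [6,20]" by (simp add: B_def Bt_def)
lemma B_6_21: "B 6 21 = [6,21]" by (simp add: B_def Bt_def)
lemma B_6_22: "B 6 22 = [6,22]" by (simp add: B_def Bt_def)
lemma B_6_23: "B 6 23 = [6,23]" by (simp add: B_def Bt_def)
lemma B_6_24: "B 6 24 = [6,24]" by (simp add: B_def Bt_def)
lemma B_6_25: "B 6 25 = [6,25]" by (simp add: B_def Bt_def)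
lemma B_6_26: "B 6 26 = [6,26]" by (simp add: B_def Bt_def)
lemma B_6_27: "B 6 27 = [6,27]" by (simp add: B_def Bt_def)
lemma B_7_8: "B 7 8 = [7,8,18]" by (simp add: B_def Bt_def)
lemma B_7_9: "B 7 9 = [7,9]" by (simp add: B_def Bt_def)
lemma B_7_10: "B 7 10 = [1,4,7,10]" by (simp add: B_def Bt_def)
lemma B_7_11: "B 7 11 = [3,7,11]" by (simp add: B_def Bt_def)
lemma B_7_12: "B 7 12 = [7,12]" by (simp add: B_def Bt_def)
lemma B_7_13: "B 7 13 = [7,13]" by (simp add: B_def Bt_def)
lemma B_7_14: "B 7 14 = [7,14]" by (simp add: B_def Bt_def)
lemma B_7_15: "B 7 15 = [7,15,20]" by (simp add: B_def Bt_def)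
lemma B_7_16: "B 7 16 = [7,16]" by (simp add: B_def Bt_def)
lemma B_7_17: "B 7 17 = [6,7,17]" by (simp add: B_def Bt_def)
lemma B_7_18: "B 7 18 = [7,8,18]" by (simp add: B_def Bt_def)
lemma B_7_19: "B 7 19 = [7,19]" by (simp add: B_def Bt_def)
lemma B_7_20: "B 7 20 = [7,15,20]" by (simp add: B_def Bt_def)
lemma B_7_21: "B 7 21 = [7,21]" by (simp add: B_def Bt_def)
lemma B_7_22: "B 7 22 = [7,22]" by (simp add: B_def Bt_def)
lemma B_7_23: "B 7 23 = [7,23]" by (simp add: B_def Bt_def)
lemma B_7_24: "B 7 24 = [7,24]" by (simp add: B_def Bt_def)
lemma B_7_25: "B 7 25 = [7,25]" by (simp add: B_def Bt_def)
lemma B_7_26: "B 7 26 = [7,26]" by (simp add: B_def Bt_def)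
lemma B_7_27: "B 7 27 = [7,27]" by (simp add: B_def Bt_def)
lemma B_8_9: "B 8 9 = [8,9,19]" by (simp add: B_def Bt_def)
lemma B_8_10: "B 8 10 = [8,10]" by (simp add: B_def Bt_def)
lemma B_8_11: "B 8 11 = [2,5,8,11]" by (simp add: B_def Bt_def)
lemma B_8_12: "B 8 12 = [8,12]" by (simp add: B_def Bt_def)
lemma B_8_13: "B 8 13 = [8,13]" by (simp add: B_def Bt_def)
lemma B_8_14: "B 8 14 = [8,14]" by (simp add: B_def Bt_def)
lemma B_8_15: "B 8 15 = [8,15]" by (simp add: B_def Bt_def)
lemma B_8_16: "B 8 16 = [8,16,21]" by (simp add: B_def Bt_def)
lemma B_8_17: "B 8 17 = [8,17]" by (simp add: B_def Bt_def)
lemma B_8_18: "B 8 18 = [7,8,18]" by (simp add: B_def Bt_def)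
lemma B_8_19: "B 8 19 = [8,9,19]" by (simp add: B_def Bt_def)
lemma B_8_20: "B 8 20 = [8,20]" by (simp add: B_def Bt_def)
lemma B_8_21: "B 8 21 = [8,16,21]" by (simp add: B_def Bt_def)
lemma B_8_22: "B 8 22 = [8,22]" by (simp add: B_def Bt_def)
lemma B_8_23: "B 8 23 = [8,23]" by (simp add: B_def Bt_def)
lemma B_8_24: "B 8 24 = [8,24]" by (simp add: B_def Bt_def)
lemma B_8_25: "B 8 25 = [8,25]" by (simp add: B_def Bt_def)
lemma B_8_26: "B 8 26 = [8,26]" by (simp add: B_def Bt_def)
lemma B_8_27: "B 8 27 = [8,27]" by (simp add: B_def Bt_def)
lemma B_9_10: "B 9 10 = [9,10,20]" by (simp add: B_def Bt_def)
lemma B_9_11: "B 9 11 = [9,11]" by (simp add: B_def Bt_def)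
lemma B_9_12: "B 9 12 = [9,12]" by (simp add: B_def Bt_def)
lemma B_9_13: "B 9 13 = [9,13]" by (simp add: B_def Bt_def)
lemma B_9_14: "B 9 14 = [9,14]" by (simp add: B_def Bt_def)
lemma B_9_15: "B 9 15 = [9,15]" by (simp add: B_def Bt_def)
lemma B_9_16: "B 9 16 = [9,16]" by (simp add: B_def Bt_def)
lemma B_9_17: "B 9 17 = [9,17,22]" by (simp add: B_def Bt_def)
lemma B_9_18: "B 9 18 = [9,18]" by (simp add: B_def Bt_def)
lemma B_9_19: "B 9 19 = [8,9,19]" by (simp add: B_def Bt_def)
lemma B_9_20: "B 9 20 = [9,10,20]" by (simp add: B_def Bt_def)
lemma B_9_21: "B 9 21 = [9,21]" by (simp add: B_def Bt_def)
lemma B_9_22: "B 9 22 = [9,17,22]" by (simp add: B_def Bt_def)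
lemma B_9_23: "B 9 23 = [9,23]" by (simp add: B_def Bt_def)
lemma B_9_24: "B 9 24 = [9,24]" by (simp add: B_def Bt_def)
lemma B_9_25: "B 9 25 = [9,25]" by (simp add: B_def Bt_def)
lemma B_9_26: "B 9 26 = [9,26]" by (simp add: B_def Bt_def)
lemma B_9_27: "B 9 27 = [9,27]" by (simp add: B_def Bt_def)
lemma B_10_11: "B 10 11 = [10,11,21]" by (simp add: B_def Bt_def)
lemma B_10_12: "B 10 12 = [10,12]" by (simp add: B_def Bt_def)
lemma B_10_13: "B 10 13 = [10,13]" by (simp add: B_def Bt_def)
lemma B_10_14: "B 10 14 = [10,14]" by (simp add: B_def Bt_def)
lemma B_10_15: "B 10 15 = [10,15]" by (simp add: B_def Bt_def)
lemma B_10_16: "B 10 16 = [10,16]" by (simp add: B_def Bt_def)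
lemma B_10_17: "B 10 17 = [10,17]" by (simp add: B_def Bt_def)
lemma B_10_18: "B 10 18 = [10,18,23]" by (simp add: B_def Bt_def)
lemma B_10_19: "B 10 19 = [10,19]" by (simp add: B_def Bt_def)
lemma B_10_20: "B 10 20 = [9,10,20]" by (simp add: B_def Bt_def)
lemma B_10_21: "B 10 21 = [10,11,21]" by (simp add: B_def Bt_def)
lemma B_10_22: "B 10 22 = [10,22]" by (simp add: B_def Bt_def)
lemma B_10_23: "B 10 23 = [10,18,23]" by (simp add: B_def Bt_def)
lemma B_10_24: "B 10 24 = [10,24]" by (simp add: B_def Bt_def)
lemma B_10_25: "B 10 25 = [10,25]" by (simp add: B_def Bt_def)
lemma B_10_26: "B 10 26 = [10,26]" by (simp add: B_def Bt_def)
lemma B_10_27: "B 10 27 = [10,27]" by (simp add: B_def Bt_def)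
lemma B_11_12: "B 11 12 = [11,12,19]" by (simp add: B_def Bt_def)
lemma B_11_13: "B 11 13 = [11,13]" by (simp add: B_def Bt_def)
lemma B_11_14: "B 11 14 = [11,14]" by (simp add: B_def Bt_def)
lemma B_11_15: "B 11 15 = [11,15]" by (simp add: B_def Bt_def)
lemma B_11_16: "B 11 16 = [11,16]" by (simp add: B_def Bt_def)
lemma B_11_17: "B 11 17 = [11,17]" by (simp add: B_def Bt_def)
lemma B_11_18: "B 11 18 = [11,18]" by (simp add: B_def Bt_def)
lemma B_11_19: "B 11 19 = [11,12,19]" by (simp add: B_def Bt_def)
lemma B_11_20: "B 11 20 = [11,20]" by (simp add: B_def Bt_def)
lemma B_11_21: "B 11 21 = [10,11,21]" by (simp add: B_def Bt_def)
lemma B_11_22: "B 11 22 = [0,11,22]" by (simp add: B_def Bt_def)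
lemma B_11_23: "B 11 23 = [11,23]" by (simp add: B_def Bt_def)
lemma B_11_24: "B 11 24 = [11,24]" by (simp add: B_def Bt_def)
lemma B_11_25: "B 11 25 = [11,25]" by (simp add: B_def Bt_def)
lemma B_11_26: "B 11 26 = [11,26]" by (simp add: B_def Bt_def)
lemma B_11_27: "B 11 27 = [11,27]" by (simp add: B_def Bt_def)
lemma B_12_13: "B 12 13 = [12,13]" by (simp add: B_def Bt_def)
lemma B_12_14: "B 12 14 = [12,14]" by (simp add: B_def Bt_def)
lemma B_12_15: "B 12 15 = [12,15,18,21]" by (simp add: B_def Bt_def)
lemma B_12_16: "B 12 16 = [12,16,20]" by (simp add: B_def Bt_def)
lemma B_12_17: "B 12 17 = [4,12,17]" by (simp add: B_def Bt_def)
lemma B_12_18: "B 12 18 = [12,15,18,21]" by (simp add: B_def Bt_def)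
lemma B_12_19: "B 12 19 = [11,12,19]" by (simp add: B_def Bt_def)
lemma B_12_20: "B 12 20 = [12,16,20]" by (simp add: B_def Bt_def)
lemma B_12_21: "B 12 21 = [12,15,18,21]" by (simp add: B_def Bt_def)
lemma B_12_22: "B 12 22 = [12,22]" by (simp add: B_def Bt_def)
lemma B_12_23: "B 12 23 = [12,23]" by (simp add: B_def Bt_def)
lemma B_12_24: "B 12 24 = [12,24]" by (simp add: B_def Bt_def)
lemma B_12_25: "B 12 25 = [12,25]" by (simp add: B_def Bt_def)
lemma B_12_26: "B 12 26 = [12,26]" by (simp add: B_def Bt_def)
lemma B_12_27: "B 12 27 = [12,27]" by (simp add: B_def Bt_def)
lemma B_13_14: "B 13 14 = [13,14]" by (simp add: B_def Bt_def)
lemma B_13_15: "B 13 15 = [13,15]" by (simp add: B_def Bt_def)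
lemma B_13_16: "B 13 16 = [13,16,19,22]" by (simp add: B_def Bt_def)
lemma B_13_17: "B 13 17 = [13,17,21]" by (simp add: B_def Bt_def)
lemma B_13_18: "B 13 18 = [5,13,18]" by (simp add: B_def Bt_def)
lemma B_13_19: "B 13 19 = [13,16,19,22]" by (simp add: B_def Bt_def)
lemma B_13_20: "B 13 20 = [0,13,20]" by (simp add: B_def Bt_def)
lemma B_13_21: "B 13 21 = [13,17,21]" by (simp add: B_def Bt_def)
lemma B_13_22: "B 13 22 = [13,16,19,22]" by (simp add: B_def Bt_def)
lemma B_13_23: "B 13 23 = [13,23]" by (simp add: B_def Bt_def)
lemma B_13_24: "B 13 24 = [13,24]" by (simp add: B_def Bt_def)
lemma B_13_25: "B 13 25 = [13,25]" by (simp add: B_def Bt_def)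
lemma B_13_26: "B 13 26 = [13,26]" by (simp add: B_def Bt_def)
lemma B_13_27: "B 13 27 = [13,27]" by (simp add: B_def Bt_def)
lemma B_14_15: "B 14 15 = [14,15]" by (simp add: B_def Bt_def)
lemma B_14_16: "B 14 16 = [14,16]" by (simp add: B_def Bt_def)
lemma B_14_17: "B 14 17 = [14,17,20,23]" by (simp add: B_def Bt_def)
lemma B_14_18: "B 14 18 = [14,18,22]" by (simp add: B_def Bt_def)
lemma B_14_19: "B 14 19 = [6,14,19]" by (simp add: B_def Bt_def)
lemma B_14_20: "B 14 20 = [14,17,20,23]" by (simp add: B_def Bt_def)
lemma B_14_21: "B 14 21 = [1,14,21]" by (simp add: B_def Bt_def)
lemma B_14_22: "B 14 22 = [14,18,22]" by (simp add: B_def Bt_def)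
lemma B_14_23: "B 14 23 = [14,17,20,23]" by (simp add: B_def Bt_def)
lemma B_14_24: "B 14 24 = [14,24]" by (simp add: B_def Bt_def)
lemma B_14_25: "B 14 25 = [14,25]" by (simp add: B_def Bt_def)
lemma B_14_26: "B 14 26 = [14,26]" by (simp add: B_def Bt_def)
lemma B_14_27: "B 14 27 = [14,27]" by (simp add: B_def Bt_def)
lemma B_15_16: "B 15 16 = [15,16]" by (simp add: B_def Bt_def)
lemma B_15_17: "B 15 17 = [15,17]" by (simp add: B_def Bt_def)
lemma B_15_18: "B 15 18 = [12,15,18,21]" by (simp add: B_def Bt_def)
lemma B_15_19: "B 15 19 = [15,19,23]" by (simp add: B_def Bt_def)
lemma B_15_20: "B 15 20 = [7,15,20]" by (simp add: B_def Bt_def)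
lemma B_15_21: "B 15 21 = [12,15,18,21]" by (simp add: B_def Bt_def)
lemma B_15_22: "B 15 22 = [2,15,22]" by (simp add: B_def Bt_def)
lemma B_15_23: "B 15 23 = [15,19,23]" by (simp add: B_def Bt_def)
lemma B_15_24: "B 15 24 = [15,24]" by (simp add: B_def Bt_def)
lemma B_15_25: "B 15 25 = [15,25]" by (simp add: B_def Bt_def)
lemma B_15_26: "B 15 26 = [15,26]" by (simp add: B_def Bt_def)
lemma B_15_27: "B 15 27 = [15,27]" by (simp add: B_def Bt_def)
lemma B_16_17: "B 16 17 = [16,17]" by (simp add: B_def Bt_def)
lemma B_16_18: "B 16 18 = [16,18]" by (simp add: B_def Bt_def)
lemma B_16_19: "B 16 19 = [13,16,19,22]" by (simp add: B_def Bt_def)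
lemma B_16_20: "B 16 20 = [12,16,20]" by (simp add: B_def Bt_def)
lemma B_16_21: "B 16 21 = [8,16,21]" by (simp add: B_def Bt_def)
lemma B_16_22: "B 16 22 = [13,16,19,22]" by (simp add: B_def Bt_def)
lemma B_16_23: "B 16 23 = [3,16,23]" by (simp add: B_def Bt_def)
lemma B_16_24: "B 16 24 = [16,24]" by (simp add: B_def Bt_def)
lemma B_16_25: "B 16 25 = [16,25]" by (simp add: B_def Bt_def)
lemma B_16_26: "B 16 26 = [16,26]" by (simp add: B_def Bt_def)
lemma B_16_27: "B 16 27 = [16,27]" by (simp add: B_def Bt_def)
lemma B_17_18: "B 17 18 = [17,18]" by (simp add: B_def Bt_def)
lemma B_17_19: "B 17 19 = [17,19]" by (simp add: B_def Bt_def)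
lemma B_17_20: "B 17 20 = [14,17,20,23]" by (simp add: B_def Bt_def)
lemma B_17_21: "B 17 21 = [13,17,21]" by (simp add: B_def Bt_def)
lemma B_17_22: "B 17 22 = [9,17,22]" by (simp add: B_def Bt_def)
lemma B_17_23: "B 17 23 = [14,17,20,23]" by (simp add: B_def Bt_def)
lemma B_17_24: "B 17 24 = [17,24]" by (simp add: B_def Bt_def)
lemma B_17_25: "B 17 25 = [17,25]" by (simp add: B_def Bt_def)
lemma B_17_26: "B 17 26 = [17,26]" by (simp add: B_def Bt_def)
lemma B_17_27: "B 17 27 = [17,27]" by (simp add: B_def Bt_def)
lemma B_18_19: "B 18 19 = [18,19]" by (simp add: B_def Bt_def)
lemma B_18_20: "B 18 20 = [18,20]" by (simp add: B_def Bt_def)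
lemma B_18_21: "B 18 21 = [12,15,18,21]" by (simp add: B_def Bt_def)
lemma B_18_22: "B 18 22 = [14,18,22]" by (simp add: B_def Bt_def)
lemma B_18_23: "B 18 23 = [10,18,23]" by (simp add: B_def Bt_def)
lemma B_18_24: "B 18 24 = [18,24]" by (simp add: B_def Bt_def)
lemma B_18_25: "B 18 25 = [18,25]" by (simp add: B_def Bt_def)
lemma B_18_26: "B 18 26 = [18,26]" by (simp add: B_def Bt_def)
lemma B_18_27: "B 18 27 = [18,27]" by (simp add: B_def Bt_def)
lemma B_19_20: "B 19 20 = [19,20]" by (simp add: B_def Bt_def)
lemma B_19_21: "B 19 21 = [19,21]" by (simp add: B_def Bt_def)
lemma B_19_22: "B 19 22 = [13,16,19,22]" by (simp add: B_def Bt_def)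
lemma B_19_23: "B 19 23 = [15,19,23]" by (simp add: B_def Bt_def)
lemma B_19_24: "B 19 24 = [19,24]" by (simp add: B_def Bt_def)
lemma B_19_25: "B 19 25 = [19,25]" by (simp add: B_def Bt_def)
lemma B_19_26: "B 19 26 = [19,26]" by (simp add: B_def Bt_def)
lemma B_19_27: "B 19 27 = [19,27]" by (simp add: B_def Bt_def)
lemma B_20_21: "B 20 21 = [20,21]" by (simp add: B_def Bt_def)
lemma B_20_22: "B 20 22 = [20,22]" by (simp add: B_def Bt_def)
lemma B_20_23: "B 20 23 = [14,17,20,23]" by (simp add: B_def Bt_def)
lemma B_20_24: "B 20 24 = [20,24]" by (simp add: B_def Bt_def)
lemma B_20_25: "B 20 25 = [20,25]" by (simp add: B_def Bt_def)
lemma B_20_26: "B 20 26 = [20,26]" by (simp add: B_def Bt_def)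
lemma B_20_27: "B 20 27 = [20,27]" by (simp add: B_def Bt_def)
lemma B_21_22: "B 21 22 = [21,22]" by (simp add: B_def Bt_def)
lemma B_21_23: "B 21 23 = [21,23]" by (simp add: B_def Bt_def)
lemma B_21_24: "B 21 24 = [21,24]" by (simp add: B_def Bt_def)
lemma B_21_25: "B 21 25 = [21,25]" by (simp add: B_def Bt_def)
lemma B_21_26: "B 21 26 = [21,26]" by (simp add: B_def Bt_def)
lemma B_21_27: "B 21 27 = [21,27]" by (simp add: B_def Bt_def)
lemma B_22_23: "B 22 23 = [22,23]" by (simp add: B_def Bt_def)
lemma B_22_24: "B 22 24 = [22,24]" by (simp add: B_def Bt_def)
lemma B_22_25: "B 22 25 = [22,25]" by (simp add: B_def Bt_def)
lemma B_22_26: "B 22 26 = [22,26]" by (simp add: B_def Bt_def)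
lemma B_22_27: "B 22 27 = [22,27]" by (simp add: B_def Bt_def)
lemma B_23_24: "B 23 24 = [23,24]" by (simp add: B_def Bt_def)
lemma B_23_25: "B 23 25 = [23,25]" by (simp add: B_def Bt_def)
lemma B_23_26: "B 23 26 = [23,26]" by (simp add: B_def Bt_def)
lemma B_23_27: "B 23 27 = [23,27]" by (simp add: B_def Bt_def)
lemma B_24_25: "B 24 25 = [24,25,26,27]" by (simp add: B_def Bt_def)
lemma B_24_26: "B 24 26 = [24,25,26,27]" by (simp add: B_def Bt_def)
lemma B_24_27: "B 24 27 = [24,25,26,27]" by (simp add: B_def Bt_def)
lemma B_25_26: "B 25 26 = [24,25,26,27]" by (simp add: B_def Bt_def)
lemma B_25_27: "B 25 27 = [24,25,26,27]" by (simp add: B_def Bt_def)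
lemma B_26_27: "B 26 27 = [24,25,26,27]" by (simp add: B_def Bt_def)
lemma B_1s_2: "B (Suc 0) 2 = B 1 2" by simp
lemma B_1s_3: "B (Suc 0) 3 = B 1 3" by simp
lemma B_1s_4: "B (Suc 0) 4 = B 1 4" by simp
lemma B_1s_5: "B (Suc 0) 5 = B 1 5" by simp
lemma B_1s_6: "B (Suc 0) 6 = B 1 6" by simp
lemma B_1s_7: "B (Suc 0) 7 = B 1 7" by simp
lemma B_1s_8: "B (Suc 0) 8 = B 1 8" by simp
lemma B_1s_9: "B (Suc 0) 9 = B 1 9" by simp
lemma B_1s_10: "B (Suc 0) 10 = B 1 10" by simp
lemma B_1s_11: "B (Suc 0) 11 = B 1 11" by simp
lemma B_1s_12: "B (Suc 0) 12 = B 1 12" by simp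
lemma B_1s_13: "B (Suc 0) 13 = B 1 13" by simp
lemma B_1s_14: "B (Suc 0) 14 = B 1 14" by simp
lemma B_1s_15: "B (Suc 0) 15 = B 1 15" by simp
lemma B_1s_16: "B (Suc 0) 16 = B 1 16" by simp
lemma B_1s_17: "B (Suc 0) 17 = B 1 17" by simp
lemma B_1s_18: "B (Suc 0) 18 = B 1 18" by simp
lemma B_1s_19: "B (Suc 0) 19 = B 1 19" by simp
lemma B_1s_20: "B (Suc 0) 20 = B 1 20" by simp
lemma B_1s_21: "B (Suc 0) 21 = B 1 21" by simp
lemma B_1s_22: "B (Suc 0) 22 = B 1 22" by simp
lemma B_1s_23: "B (Suc 0) 23 = B 1 23" by simp
lemma B_1s_24: "B (Suc 0) 24 = B 1 24" by simp
lemma B_1s_25: "B (Suc 0) 25 = B 1 25" by simp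
lemma B_1s_26: "B (Suc 0) 26 = B 1 26" by simp
lemma B_1s_27: "B (Suc 0) 27 = B 1 27" by simp
lemmas B_simps = B_1s_2[unfolded B_1_2] B_1s_3[unfolded B_1_3] B_1s_4[unfolded B_1_4] B_1s_5[unfolded B_1_5] B_1s_6[unfolded B_1_6] B_1s_7[unfolded B_1_7] B_1s_8[unfolded B_1_8] B_1s_9[unfolded B_1_9] B_1s_10[unfolded B_1_10] B_1s_11[unfolded B_1_11] B_1s_12[unfolded B_1_12] B_1s_13[unfolded B_1_13] B_1s_14[unfolded B_1_14] B_1s_15[unfolded B_1_15] B_1s_16[unfolded B_1_16] B_1s_17[unfolded B_1_17] B_1s_18[unfolded B_1_18] B_1s_19[unfolded B_1_19] B_1s_20[unfolded B_1_20] B_1s_21[unfolded B_1_21] B_1s_22[unfolded B_1_22] B_1s_23[unfolded B_1_23] B_1s_24[unfolded B_1_24] B_1s_25[unfolded B_1_25] B_1s_26[unfolded B_1_26] B_1s_27[unfolded B_1_27] B_0_1 B_0_2 B_0_3 B_0_4 B_0_5 B_0_6 B_0_7 B_0_8 B_0_9 B_0_10 B_0_11 B_0_12 B_0_13 B_0_14 B_0_15 B_0_16 B_0_17 B_0_18 B_0_19 B_0_20 B_0_21 B_0_22 B_0_23 B_0_24 B_0_25 B_0_26 B_0_27 B_1_2 B_1_3 B_1_4 B_1_5 B_1_6 B_1_7 B_1_8 B_1_9 B_1_10 B_1_11 B_1_12 B_1_13 B_1_14 B_1_15 B_1_16 B_1_17 B_1_18 B_1_19 B_1_20 B_1_21 B_1_22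 B_1_23 B_1_24 B_1_25 B_1_26 B_1_27 B_2_3 B_2_4 B_2_5 B_2_6 B_2_7 B_2_8 B_2_9 B_2_10 B_2_11 B_2_12 B_2_13 B_2_14 B_2_15 B_2_16 B_2_17 B_2_18 B_2_19 B_2_20 B_2_21 B_2_22 B_2_23 B_2_24 B_2_25 B_2_26 B_2_27 B_3_4 B_3_5 B_3_6 B_3_7 B_3_8 B_3_9 B_3_10 B_3_11 B_3_12 B_3_13 B_3_14 B_3_15 B_3_16 B_3_17 B_3_18 B_3_19 B_3_20 B_3_21 B_3_22 B_3_23 B_3_24 B_3_25 B_3_26 B_3_27 B_4_5 B_4_6 B_4_7 B_4_8 B_4_9 B_4_10 B_4_11 B_4_12 B_4_13 B_4_14 B_4_15 B_4_16 B_4_17 B_4_18 B_4_19 B_4_20 B_4_21 B_4_22 B_4_23 B_4_24 B_4_25 B_4_26 B_4_27 B_5_6 B_5_7 B_5_8 B_5_9 B_5_10 B_5_11 B_5_12 B_5_13 B_5_14 B_5_15 B_5_16 B_5_17 B_5_18 B_5_19 B_5_20 B_5_21 B_5_22 B_5_23 B_5_24 B_5_25 B_5_26 B_5_27 B_6_7 B_6_8 B_6_9 B_6_10 B_6_11 B_6_12 B_6_13 B_6_14 B_6_15 B_6_16 B_6_17 B_6_18 B_6_19 B_6_20 B_6_21 B_6_22 B_6_23 B_6_24 B_6_25 B_6_26 B_6_27 B_7_8 B_7_9 B_7_10 B_7_11 B_7_12 B_7_13 B_7_14 B_7_15 B_7_16 B_7_17 B_7_18 B_7_19 B_7_20 B_7_21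 B_7_22 B_7_23 B_7_24 B_7_25 B_7_26 B_7_27 B_8_9 B_8_10 B_8_11 B_8_12 B_8_13 B_8_14 B_8_15 B_8_16 B_8_17 B_8_18 B_8_19 B_8_20 B_8_21 B_8_22 B_8_23 B_8_24 B_8_25 B_8_26 B_8_27 B_9_10 B_9_11 B_9_12 B_9_13 B_9_14 B_9_15 B_9_16 B_9_17 B_9_18 B_9_19 B_9_20 B_9_21 B_9_22 B_9_23 B_9_24 B_9_25 B_9_26 B_9_27 B_10_11 B_10_12 B_10_13 B_10_14 B_10_15 B_10_16 B_10_17 B_10_18 B_10_19 B_10_20 B_10_21 B_10_22 B_10_23 B_10_24 B_10_25 B_10_26 B_10_27 B_11_12 B_11_13 B_11_14 B_11_15 B_11_16 B_11_17 B_11_18 B_11_19 B_11_20 B_11_21 B_11_22 B_11_23 B_11_24 B_11_25 B_11_26 B_11_27 B_12_13 B_12_14 B_12_15 B_12_16 B_12_17 B_12_18 B_12_19 B_12_20 B_12_21 B_12_22 B_12_23 B_12_24 B_12_25 B_12_26 B_12_27 B_13_14 B_13_15 B_13_16 B_13_17 B_13_18 B_13_19 B_13_20 B_13_21 B_13_22 B_13_23 B_13_24 B_13_25 B_13_26 B_13_27 B_14_15 B_14_16 B_14_17 B_14_18 B_14_19 B_14_20 B_14_21 B_14_22 B_14_23 B_14_24 B_14_25 B_14_26 B_14_27 B_15_16 B_15_17 B_15_18 B_15_19 B_15_20 B_15_21 B_15_22 B_15_23 B_15_24 B_15_25 B_15_26 B_15_27 B_16_17 B_16_18 B_16_19 B_16_20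 B_16_21 B_16_22 B_16_23 B_16_24 B_16_25 B_16_26 B_16_27 B_17_18 B_17_19 B_17_20 B_17_21 B_17_22 B_17_23 B_17_24 B_17_25 B_17_26 B_17_27 B_18_19 B_18_20 B_18_21 B_18_22 B_18_23 B_18_24 B_18_25 B_18_26 B_18_27 B_19_20 B_19_21 B_19_22 B_19_23 B_19_24 B_19_25 B_19_26 B_19_27 B_20_21 B_20_22 B_20_23 B_20_24 B_20_25 B_20_26 B_20_27 B_21_22 B_21_23 B_21_24 B_21_25 B_21_26 B_21_27 B_22_23 B_22_24 B_22_25 B_22_26 B_22_27 B_23_24 B_23_25 B_23_26 B_23_27 B_24_25 B_24_26 B_24_27 B_25_26 B_25_27 B_26_27
lemma B_0_1s: "B 0 (Suc 0) = [0,1,23]" by (simp add: B_def Bt_def)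
lemma all_lt_num: "(\<forall>x<numeral n. P (x::nat)) \<longleftrightarrow> P (pred_numeral n) \<and> (\<forall>x<pred_numeral n. P x)"
  by (metis less_Suc_eq numeral_eq_Suc)

definition q3 :: complex where "q3 = complex_of_real (sqrt 3)"
lemma q3sq: "q3^2 = 3" by (simp add: q3_def power2_eq_square flip: of_real_mult)

lemma sqrt3_gt: "sqrt 3 > (3/2::real)"
proof -
  have "(3/2::real) = sqrt ((3/2)^2)" by simp
  also have "\<dots> < sqrt 3" by (subst real_sqrt_less_iff) (simp add: power2_eq_square)
  finally show ?thesis .
qed

definition r1 :: complex where "r1 = complex_of_real (root 4 (8 * sqrt 3 - 12))"
lemma r1_4: "r1^4 = 8*q3 - 12"
proof -
  have pos: "0 \<le> 8 * sqrt 3 - (12::real)" using sqrt3_gt by simp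
  have "r1^4 = complex_of_real ((root 4 (8 * sqrt 3 - 12))^4)" by (simp add: r1_def)
  also have "\<dots> = complex_of_real (8 * sqrt 3 - 12)" using pos by simp
  finally show ?thesis by (simp add: q3_def)
qed
lemma r1_nz: "r1 \<noteq> 0"
  using sqrt3_gt by (simp add: r1_def)

lemma emb_one[simp]: "emb (1,0,0,0) = 1" by simp
lemma emb_zero[simp]: "emb (0,0,0,0) = 0" by simp
lemma emb_zpow: "emb (zpow a n) = (emb a)^n"
  by (induction n) (simp_all add: emb_mul)
lemma emb_zneg: "emb (zneg a) = - emb a" by (cases a) (simp add: algebra_simps)
lemma emb_inj: "emb a = emb b \<Longrightarrow> a = b"
proof -
  assume "emb a = emb b"
  then have "emb (zsub a b) = 0" by (simp add: emb_sub)
  then have "zsub a b = (0,0,0,0)" by (simp add: emb_eq0)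
  then show "a = b" by (cases a; cases b) simp
qed
lemma emb_ztz: "emb ztz = zt" by (simp add: ztz_def)
lemma emb_k1z: "emb k1z = q3 - 1" unfolding k1z_def emb_alt by (simp add: q3_def complex_eq_iff)

lemma zt6: "zt^6 = -1"
proof -
  have "zt^6 = zt^4 * zt^2" by (simp add: power_add[symmetric])
  also have "\<dots> = (zt^2 - 1) * zt^2" by (simp only: zt4)
  also have "\<dots> = zt^2 * zt^2 - zt^2" by (simp add: algebra_simps)
  also have "zt^2 * zt^2 = zt^4" by (simp add: power_add[symmetric])
  finally show ?thesis by (simp add: zt4)
qed
lemma zt12: "zt^12 = 1"
proof -
  have "zt^12 = zt^6 * zt^6" by (simp add: power_add[symmetric])
  then show ?thesis by (simp add: zt6)
qed

lemma roots_explicit: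
  fixes w :: "nat \<Rightarrow> complex"
  assumes n: "0 < n" and w: "\<forall>k<n. (w k)^n = 1" and inj: "inj_on w {..<n}" and z: "z^n = 1"
  shows "\<exists>k<n. z = w k"
proof -
  have sub: "w ` {..<n} \<subseteq> {z. z^n = 1}" using w by auto
  have c1: "card (w ` {..<n}) = n" using card_image[OF inj] by simp
  have c2: "card {z::complex. z^n = 1} \<le> n" using card_roots_unity[of n] n by simp
  have fin: "finite {z::complex. z^n = 1}" using finite_roots_unity[of n] n by simp
  have "w ` {..<n} = {z. z^n = 1}" using card_subset_eq[OF fin sub] c1 c2 card_mono[OF fin sub] by simp
  then show ?thesis using z by auto
qed


lemma zpow_ztz_inj: "\<forall>k<12. \<forall>j<12. zpow ztz j = zpow ztz k \<longrightarrow> j = k"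
  by (simp add: all_lt_num ztz_def)

lemma zt_pow_emb: "zt^j = emb (zpow ztz j)" by (simp add: emb_zpow emb_ztz)

lemma roots12: assumes "z^12 = 1" shows "\<exists>j<12. z = zt^j"
proof (rule roots_explicit[OF _ _ _ assms])
  show "\<forall>k<12. (zt^k)^12 = 1" by (simp add: power_mult[symmetric] mult.commute[of _ 12] power_mult zt12)
  show "inj_on (\<lambda>j. zt^j) {..<12}"
  proof (rule inj_onI)
    fix j k assume "j \<in> {..<12}" "k \<in> {..<12}" "zt^j = zt^k"
    then have "zpow ztz j = zpow ztz k" using emb_inj zt_pow_emb by metis
    then show "j = k" using zpow_ztz_inj \<open>j \<in> {..<12}\<close> \<open>k \<in> {..<12}\<close> by simp
  qed
qed simp

lemma zpow_om_inj: "\<forall>k<3. \<forall>j<3. zpow ztz (4*j) = zpow ztz (4*k) \<longrightarrow> j = k"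
  by (simp add: all_lt_num ztz_def)

lemma roots3: assumes "z^3 = 1" shows "\<exists>j<3. z = zt^(4*j)"
proof (rule roots_explicit[OF _ _ _ assms])
  show "\<forall>k<3. (zt^(4*k))^3 = 1"
  proof (intro allI impI)
    fix k :: nat
    have "(zt^(4*k))^3 = (zt^12)^k" by (simp add: power_mult[symmetric] mult.commute mult.left_commute)
    then show "(zt^(4*k))^3 = 1" by (simp add: zt12)
  qed
  show "inj_on (\<lambda>j. zt^(4*j)) {..<3}"
  proof (rule inj_onI)
    fix j k assume "j \<in> {..<3}" "k \<in> {..<3}" "zt^(4*j) = zt^(4*k)"
    then have "zpow ztz (4*j) = zpow ztz (4*k)" using emb_inj zt_pow_emb by metis
    then show "j = k" using zpow_om_inj \<open>j \<in> {..<3}\<close> \<open>k \<in> {..<3}\<close> by simp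
  qed
qed simp

lemma smult3_smult3: "smult3 a (smult3 b p) = smult3 (a*b) p"
  by (cases p) (simp add: algebra_simps)
lemma smult3_1: "smult3 1 p = p" by (cases p) simp

lemma pc_eq_D: assumes "proj_class p = proj_class p'" shows "\<exists>k. k \<noteq> 0 \<and> p' = smult3 k p"
proof -
  have "p' \<in> proj_class p'" unfolding proj_class_def using smult3_1[of p'] by (metis (mono_tags, lifting) mem_Collect_eq one_neq_zero)
  then show ?thesis using assms unfolding proj_class_def by auto
qed

lemma pc_eq_I: assumes "k \<noteq> 0" "p' = smult3 k p" shows "proj_class p' = proj_class p"
proof -
  have "smult3 c p' = smult3 (c*k) p" for c using assms(2) smult3_smult3 by simp
  moreover have "smult3 c p = smult3 (c/k) p'" for c using assms by (simp add: smult3_smult3)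
  ultimately show ?thesis unfolding proj_class_def using assms(1) by (auto; metis divide_eq_0_iff mult_eq_0_iff)
qed

lemma fam_quad: assumes E1: "\<beta>^3 = -2*\<sigma>" and E2: "3*\<alpha>*\<beta>^2 = \<sigma>^2 + 2*\<pi>" and E3: "3*\<alpha>^2*\<beta> = -2*\<sigma>*\<pi>"
  and bnz: "\<beta> \<noteq> (0::complex)"
  shows "24*\<alpha>^2 - 12*\<alpha>*\<beta>^4 + \<beta>^8 = 0"
proof -
  have "\<beta> * (24*\<alpha>^2 - 12*\<alpha>*\<beta>^4 + \<beta>^8) = 0" using E1 E2 E3 by algebra
  then show ?thesis using bnz by simp
qed

lemma sig_sq: assumes "s = -(b^3)/2" "b = r1*u" shows "s^2 = r1^2*u^6*(2*q3-3)"
proof -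
  have "s^2 = r1^2 * r1^4 * u^6 / 4" using assms by (simp add: power2_eq_square power3_eq_cube algebra_simps numeral_eq_Suc)
  also have "\<dots> = r1^2 * u^6 * (r1^4/4)" by (simp add: algebra_simps)
  also have "r1^4/4 = 2*q3 - 3" by (simp add: r1_4 field_simps)
  finally show ?thesis .
qed

lemma fam_solve:
  assumes E1: "\<beta>^3 = -2*\<sigma>" and E2: "3*\<alpha>*\<beta>^2 = \<sigma>^2 + 2*\<pi>" and E3: "3*\<alpha>^2*\<beta> = -2*\<sigma>*\<pi>"
    and E4: "1 + \<alpha>^3 = \<pi>^2" and bnz: "\<beta> \<noteq> 0"
  shows "(\<alpha> = (q3-1)*(\<beta>/r1)^4 \<and> (\<beta>/r1)^12 = 1) \<or> (\<alpha> = (3*q3-5)*(\<beta>/r1)^4 \<and> (\<beta>/r1)^12 = -(1351+780*q3))"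
proof -
  define u where "u = \<beta>/r1"
  have b: "\<beta> = r1*u" using r1_nz u_def by simp
  have b4: "\<beta>^4 = (8*q3-12)*u^4" by (simp add: b power_mult_distrib r1_4)
  have q: "q3*q3 = 3" using q3sq by (simp add: power2_eq_square)
  have Q: "24*\<alpha>^2 - 12*\<alpha>*\<beta>^4 + \<beta>^8 = 0" using fam_quad[OF E1 E2 E3 bnz] .
  have "(12*\<alpha> - (3+q3)*\<beta>^4)*(12*\<alpha> - (3-q3)*\<beta>^4) = 144*\<alpha>^2 - 72*\<alpha>*\<beta>^4 + (9 - q3*q3)*\<beta>^8"
    by (simp add: algebra_simps power2_eq_square numeral_eq_Suc)
  also have "\<dots> = 6*(24*\<alpha>^2 - 12*\<alpha>*\<beta>^4 + \<beta>^8)" using q by (simp add: algebra_simps)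
  finally have "(12*\<alpha> - (3+q3)*\<beta>^4)*(12*\<alpha> - (3-q3)*\<beta>^4) = 0" using Q by simp
  then have cases: "12*\<alpha> = (3+q3)*\<beta>^4 \<or> 12*\<alpha> = (3-q3)*\<beta>^4" by simp
  have s: "\<sigma> = -(\<beta>^3)/2" using E1 by simp
  have ss: "\<sigma>^2 = r1^2*u^6*(2*q3-3)" using sig_sq[OF s b] .
  have pp: "2*\<pi> = 3*\<alpha>*\<beta>^2 - \<sigma>^2" using E2 by simp
  have b2: "\<beta>^2 = r1^2*u^2" by (simp add: b power_mult_distrib)
  have q3c: "q3^3 = 3*q3" using q by (simp add: power3_eq_cube)
  from cases show ?thesis
  proof
    assume h: "12*\<alpha> = (3+q3)*\<beta>^4"
    have a: "\<alpha> = (q3-1)*u^4"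
    proof -
      have "12*\<alpha> = (3+q3)*(8*q3-12)*u^4" using h b4 by simp
      also have "(3+q3)*(8*q3-12) = 12*(q3-1)" using q by (simp add: algebra_simps)
      finally have "12*\<alpha> = 12*((q3-1)*u^4)" by (simp add: algebra_simps)
      then show ?thesis by simp
    qed
    have p2: "2*\<pi> = r1^2*u^6*q3"
      unfolding pp ss a b2 by (simp add: algebra_simps numeral_eq_Suc)
    have "4*\<pi>^2 = (2*\<pi>)^2" by (simp add: power2_eq_square)
    also have "\<dots> = (r1^2*u^6*q3)^2" using p2 by simp
    also have "\<dots> = r1^4*u^12*q3^2" by (simp add: power_mult_distrib flip: power_mult)
    finally have "4*\<pi>^2 = (8*q3-12)*u^12*3" by (simp only: r1_4 q3sq)
    moreover have "4*(1+\<alpha>^3) = 4 + (24*q3 - 40)*u^12"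
    proof -
      have c: "(q3-1)^3 = 6*q3 - 10" by (simp add: power3_eq_cube algebra_simps q)
      have "\<alpha>^3 = (q3-1)^3 * u^12" unfolding a by (simp add: power_mult_distrib flip: power_mult)
      then have a3: "\<alpha>^3 = (6*q3 - 10) * u^12" using c by simp
      show ?thesis unfolding a3 by (simp add: algebra_simps)
    qed
    ultimately have "4 + (24*q3 - 40)*u^12 = (8*q3-12)*u^12*3" using E4 by simp
    then have "u^12 = 1" by (simp add: algebra_simps)
    then show ?thesis using a u_def by simp
  next
    assume h: "12*\<alpha> = (3-q3)*\<beta>^4"
    have a: "\<alpha> = (3*q3-5)*u^4"
    proof -
      have "12*\<alpha> = (3-q3)*(8*q3-12)*u^4" using h b4 by simp
      also have "(3-q3)*(8*q3-12) = 12*(3*q3-5)" using q by (simp add: algebra_simps)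
      finally have "12*\<alpha> = 12*((3*q3-5)*u^4)" by (simp add: algebra_simps)
      then show ?thesis by simp
    qed
    have p2: "2*\<pi> = r1^2*u^6*(7*q3-12)"
      unfolding pp ss a b2 by (simp add: algebra_simps numeral_eq_Suc)
    have "4*\<pi>^2 = (2*\<pi>)^2" by (simp add: power2_eq_square)
    also have "\<dots> = (r1^2*u^6*(7*q3-12))^2" using p2 by simp
    also have "\<dots> = r1^4*u^12*(7*q3-12)^2" by (simp add: power_mult_distrib flip: power_mult)
    finally have "4*\<pi>^2 = (8*q3-12)*u^12*(7*q3-12)^2" by (simp only: r1_4)
    also have "(8*q3-12)*u^12*(7*q3-12)^2 = ((8*q3-12)*(7*q3-12)^2)*u^12" by (simp add: ac_simps)
    also have "(7*q3-12)^2 = 291 - 168*q3" by (simp add: power2_eq_square algebra_simps q)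
    also have "(8*q3-12)*(291 - 168*q3) = 4344*q3 - 7524" by (simp add: algebra_simps q)
    finally have l: "4*\<pi>^2 = (4344*q3 - 7524)*u^12" .
    have c: "(3*q3-5)^3 = 306*q3 - 530" by (simp add: power3_eq_cube algebra_simps q)
    have "\<alpha>^3 = (3*q3-5)^3 * u^12" unfolding a by (simp add: power_mult_distrib flip: power_mult)
    then have a3: "\<alpha>^3 = (306*q3 - 530) * u^12" using c by simp
    have "4*(1+\<alpha>^3) = 4 + (1224*q3 - 2120)*u^12" unfolding a3 by (simp add: algebra_simps)
    then have "4 + (1224*q3 - 2120)*u^12 = (4344*q3 - 7524)*u^12" using E4 l by simp
    then have "4*((780*q3 - 1351)*u^12) = 4*1" by (simp add: algebra_simps)
    then have k: "(780*q3 - 1351)*u^12 = 1" by (simp only: mult_cancel_left) simp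
    have "u^12 = -(780*q3+1351)*((780*q3 - 1351)*u^12)"
      by (simp add: algebra_simps q)
    then have "u^12 = -(1351+780*q3)" using k by simp
    then show ?thesis using a u_def by simp
  qed
qed

definition L :: "nat \<Rightarrow> pt3" where
  "L i = (if i = 27 then (1,0,0) else (emb (fst (R i)), r1 * emb (snd (R i)), -1))"

definition cc :: complex where "cc = emb cz"

lemma emb_omz: "emb omz = zt^4" by (simp only: omz_def emb_zpow emb_ztz)

lemma zt_pow_comm: "(zt^4)^j = (zt^j)^4" by (simp add: power_mult[symmetric] mult.commute)

lemma L_fam1: assumes "j < 12" shows "L j = ((q3-1)*(zt^j)^4, r1*zt^j, -1)"
proof -
  have "R j = (zmul k1z (zpow omz j), zpow ztz j)" using assms by (simp add: R_def)
  then show ?thesis using assms by (simp add: L_def emb_mul emb_zpow emb_k1z emb_omz emb_ztz zt_pow_comm)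
qed

lemma emb_k2z: "emb k2z = (3*q3-5)*cc^4"
proof -
  have k: "k2z = zmul (-5,6,0,-3) (zpow cz 4)" by (simp add: k2z_def cz_def)
  have e: "emb (-5,6,0,-3) = 3*q3-5" unfolding emb_alt by (simp add: q3_def complex_eq_iff)
  have "emb k2z = emb (-5,6,0,-3) * (emb cz)^4" unfolding k by (simp only: emb_mul emb_zpow)
  then show ?thesis by (simp only: e cc_def)
qed

lemma L_fam2: assumes "j < 12" shows "L (12+j) = ((3*q3-5)*(cc*zt^j)^4, r1*(cc*zt^j), -1)"
proof -
  have "R (12+j) = (zmul k2z (zpow omz j), zmul cz (zpow ztz j))" using assms by (simp add: R_def)
  then show ?thesis using assms
    by (simp add: L_def emb_mul emb_zpow emb_k2z emb_omz emb_ztz zt_pow_comm cc_def power_mult_distrib)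
qed

lemma L_hyp: assumes "k < 3" shows "L (24+k) = (-(zt^(4*k)), 0, -1)"
proof -
  have "R (24+k) = (zneg (zpow omz k), (0,0,0,0))" using assms by (simp add: R_def)
  then show ?thesis using assms by (simp add: L_def emb_zneg emb_zpow emb_omz power_mult)
qed

lemma cc12: "cc^12 = -(1351+780*q3)"
proof -
  have "zpow cz 12 = (-1351,-1560,0,780)" by (simp add: cz_def)
  then have "cc^12 = emb (-1351,-1560,0,780)" by (simp add: cc_def emb_zpow[symmetric])
  also have "\<dots> = -(1351+780*q3)" unfolding emb_alt by (simp add: q3_def complex_eq_iff)
  finally show ?thesis .
qed

lemma cc_nz: "cc \<noteq> 0"
proof
  assume "cc = 0"
  then have "1351 + 780*q3 = 0" using cc12 by simp
  moreover have "1351 + 780*q3 = complex_of_real (1351 + 780 * sqrt 3)" by (simp add: q3_def)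
  moreover have "(1351 + 780 * sqrt 3::real) > 0" by (simp add: add_pos_nonneg)
  ultimately show False by (metis of_real_eq_0_iff less_irrefl)
qed

lemma ident_fam:
  assumes E1: "\<beta>^3 = -2*\<sigma>" and E2: "3*\<alpha>*\<beta>^2 = \<sigma>^2 + 2*\<pi>" and E3: "3*\<alpha>^2*\<beta> = -2*\<sigma>*\<pi>"
    and E4: "1 + \<alpha>^3 = \<pi>^2" and bnz: "\<beta> \<noteq> 0"
  shows "\<exists>i<28. (\<alpha>, \<beta>, -1) = L i"
proof -
  define u where "u = \<beta>/r1"
  have b: "\<beta> = r1*u" using r1_nz u_def by simp
  from fam_solve[OF E1 E2 E3 E4 bnz] have
    "(\<alpha> = (q3-1)*u^4 \<and> u^12 = 1) \<or> (\<alpha> = (3*q3-5)*u^4 \<and> u^12 = -(1351+780*q3))"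
    unfolding u_def .
  then show ?thesis
  proof
    assume h: "\<alpha> = (q3-1)*u^4 \<and> u^12 = 1"
    then obtain j where j: "j < 12" "u = zt^j" using roots12 by blast
    have "(\<alpha>, \<beta>, -1) = L j" using L_fam1[OF j(1)] h j b by simp
    then show ?thesis using j(1) by (intro exI[of _ j]) simp
  next
    assume h: "\<alpha> = (3*q3-5)*u^4 \<and> u^12 = -(1351+780*q3)"
    define v where "v = u/cc"
    have u: "u = cc*v" using cc_nz v_def by simp
    have "cc^12 * v^12 = cc^12 * 1" using h u cc12 by (simp add: power_mult_distrib)
    then have "v^12 = 1" using cc_nz by simp
    then obtain j where j: "j < 12" "v = zt^j" using roots12 by blast
    have "(\<alpha>, \<beta>, -1) = L (12+j)" using L_fam2[OF j(1)] h j b u by simp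
    then show ?thesis using j(1) by (intro exI[of _ "12+j"]) simp
  qed
qed

lemma ident_hyp: assumes "\<alpha>^3 = -1" shows "\<exists>i<28. (\<alpha>, 0, -1) = L i"
proof -
  have "(-\<alpha>)^3 = 1" using assms by simp
  then obtain k where k: "k < 3" "-\<alpha> = zt^(4*k)" using roots3 by blast
  have "\<alpha> = -(zt^(4*k))" using k(2) by (metis minus_minus)
  then have "(\<alpha>, 0, -1) = L (24+k)" using L_hyp[OF k(1)] by simp
  then show ?thesis using k(1) by (intro exI[of _ "24+k"]) simp
qed

lemma g_fact:
  fixes \<alpha> \<beta> t1 t2 X Y :: complex
  assumes "\<beta>^3 = -2*(t1+t2)" "3*\<alpha>*\<beta>^2 = (t1+t2)^2 + 2*(t1*t2)"
    "3*\<alpha>^2*\<beta> = -2*(t1+t2)*(t1*t2)" "1 + \<alpha>^3 = (t1*t2)^2"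
  shows "X^4 + Y^4 + X*(\<alpha>*X+\<beta>*Y)^3 = (Y - t1*X)^2*(Y - t2*X)^2"
  using assms by algebra

lemma int2_at:
  fixes \<alpha> \<beta> t1 t2 :: complex
  assumes E: "\<beta>^3 = -2*(t1+t2)" "3*\<alpha>*\<beta>^2 = (t1+t2)^2 + 2*(t1*t2)"
    "3*\<alpha>^2*\<beta> = -2*(t1+t2)*(t1*t2)" "1 + \<alpha>^3 = (t1*t2)^2" and ne: "t1 \<noteq> t2"
  shows "2 \<le> int_mult (\<alpha>, \<beta>, -1) (1, t1, \<alpha> + \<beta>*t1)"
proof (rule im_ge2_intro)
  show "(\<alpha>, \<beta>, -1::complex) \<noteq> (0,0,0)" by simp
  fix q assume iq: "incid (\<alpha>, \<beta>, -1) q" and nq: "\<not> (\<exists>c. q = smult3 c (1, t1, \<alpha> + \<beta>*t1))"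
  obtain x1 y1 z1 where q: "q = (x1,y1,z1)" by (cases q) auto
  have z1: "z1 = \<alpha>*x1 + \<beta>*y1" using iq q by simp
  have ne1: "y1 - t1*x1 \<noteq> 0"
  proof
    assume "y1 - t1*x1 = 0"
    then have "q = smult3 x1 (1, t1, \<alpha> + \<beta>*t1)" using q z1 by (simp add: algebra_simps)
    then show False using nq by blast
  qed
  define Q where "Q = [:t1 - t2, y1 - t2*x1:]"
  have Qnz: "Q \<noteq> 0" using ne Q_def by simp
  have eq: "restr48 (1, t1, \<alpha> + \<beta>*t1) q = monom 1 2 * ([:(y1 - t1*x1)^2:] * Q^2)"
  proof -
    have "poly (restr48 (1, t1, \<alpha> + \<beta>*t1) q) t = poly (monom 1 2 * ([:(y1 - t1*x1)^2:] * Q^2)) t" for t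
    proof -
      have "poly (restr48 (1, t1, \<alpha> + \<beta>*t1) q) t =
        (1+t*x1)^4 + (t1+t*y1)^4 + (1+t*x1)*(\<alpha>*(1+t*x1) + \<beta>*(t1+t*y1))^3"
        unfolding q restr48_poly z1 F48_simp by (simp add: algebra_simps)
      also have "\<dots> = ((t1+t*y1) - t1*(1+t*x1))^2*((t1+t*y1) - t2*(1+t*x1))^2"
        by (rule g_fact[OF E])
      also have "\<dots> = poly (monom 1 2 * ([:(y1 - t1*x1)^2:] * Q^2)) t"
        unfolding Q_def by (simp add: poly_monom algebra_simps power2_eq_square)
      finally show ?thesis .
    qed
    then show ?thesis by (intro poly_eq_poly_eq_iff[THEN iffD1]) auto
  qed
  have nz: "monom 1 2 * ([:(y1 - t1*x1)^2:] * Q^2) \<noteq> (0 :: complex poly)"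
    using ne1 Qnz by (simp add: monom_eq_0_iff)
  show "restr48 (1, t1, \<alpha> + \<beta>*t1) q \<noteq> 0 \<and> monom 1 2 dvd restr48 (1, t1, \<alpha> + \<beta>*t1) q"
    unfolding eq by (intro conjI nz dvd_triv_left)
qed

lemma bit_gen:
  fixes \<alpha> \<beta> \<sigma> \<pi> :: complex
  assumes E3: "3*\<alpha>^2*\<beta> = -2*\<sigma>*\<pi>" and E4: "1 + \<alpha>^3 = \<pi>^2"
    and s: "\<sigma> = -(\<beta>^3)/2" and p: "\<pi> = (3*\<alpha>*\<beta>^2 - \<sigma>^2)/2" and D: "\<sigma>^2 - 4*\<pi> \<noteq> 0"
  shows "bitangent48 (\<alpha>, \<beta>, -1)"
proof -
  define d where "d = csqrt (\<sigma>^2 - 4*\<pi>)"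
  have d2: "d^2 = \<sigma>^2 - 4*\<pi>" unfolding d_def by simp
  have dnz: "d \<noteq> 0" using d2 D by auto
  define t1 where "t1 = (\<sigma> + d)/2"
  define t2 where "t2 = (\<sigma> - d)/2"
  have sum: "t1 + t2 = \<sigma>" unfolding t1_def t2_def by (simp add: field_simps)
  have prod: "t1 * t2 = \<pi>"
  proof -
    have "t1 * t2 = (\<sigma>^2 - d^2)/4" unfolding t1_def t2_def by (simp add: field_simps power2_eq_square)
    then show ?thesis using d2 by simp
  qed
  have ne: "t1 \<noteq> t2" using dnz unfolding t1_def t2_def by (simp add: field_simps)
  have E1: "\<beta>^3 = -2*(t1+t2)" using s sum by simp
  have p': "2*\<pi> = 3*\<alpha>*\<beta>^2 - \<sigma>^2" unfolding p by simp
  have E2: "3*\<alpha>*\<beta>^2 = (t1+t2)^2 + 2*(t1*t2)" unfolding sum prod using p' by simp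
  have E3': "3*\<alpha>^2*\<beta> = -2*(t1+t2)*(t1*t2)" using E3 sum prod by simp
  have E4': "1 + \<alpha>^3 = (t1*t2)^2" using E4 prod by simp
  have i1: "2 \<le> int_mult (\<alpha>, \<beta>, -1) (1, t1, \<alpha> + \<beta>*t1)" using int2_at[OF E1 E2 E3' E4' ne] .
  have i2: "2 \<le> int_mult (\<alpha>, \<beta>, -1) (1, t2, \<alpha> + \<beta>*t2)"
    using int2_at[of \<beta> t2 t1 \<alpha>] E1 E2 E3' E4' ne by (simp add: add.commute mult.commute)
  have dc: "proj_class (1, t1, \<alpha> + \<beta>*t1) \<noteq> proj_class (1, t2, \<alpha> + \<beta>*t2)"
  proof
    assume "proj_class (1, t1, \<alpha> + \<beta>*t1) = proj_class (1, t2, \<alpha> + \<beta>*t2)"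
    then obtain k where "(1, t2, \<alpha> + \<beta>*t2) = smult3 k (1, t1, \<alpha> + \<beta>*t1)" using pc_eq_D by blast
    then show False using ne by simp
  qed
  show ?thesis unfolding bitangent48_def
    by (rule conjI, simp, rule disjI1, rule exI[of _ "(1, t1, \<alpha> + \<beta>*t1)"], rule exI[of _ "(1, t2, \<alpha> + \<beta>*t2)"])
       (use i1 i2 dc in simp)
qed

lemma q3_ne: "21 - 12*q3 \<noteq> 0"
proof
  assume "21 - 12*q3 = 0"
  then have h: "q3 = 7/4" by (simp add: field_simps)
  have "q3^2 = 49/16" unfolding h by (simp add: power2_eq_square)
  then show False using q3sq by simp
qed

lemma bit_fam:
  fixes K u \<alpha> \<beta> :: complex
  assumes a: "\<alpha> = K*u^4" and b: "\<beta> = r1*u" and u: "u \<noteq> 0"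
    and K: "(K = q3 - 1 \<and> u^12 = 1) \<or> (K = 3*q3 - 5 \<and> u^12 = -(1351+780*q3))"
  shows "bitangent48 (\<alpha>, \<beta>, -1)"
proof -
  define \<sigma> where "\<sigma> = -(\<beta>^3)/2"
  define \<pi> where "\<pi> = (3*\<alpha>*\<beta>^2 - \<sigma>^2)/2"
  define M where "M = 3*K - 2*q3 + 3"
  have q: "q3*q3 = 3" using q3sq by (simp add: power2_eq_square)
  have r4: "r1^4 = 8*q3 - 12" by (rule r1_4)
  have ss: "\<sigma>^2 = r1^2*u^6*(2*q3-3)" using sig_sq[OF \<sigma>_def b] .
  have p2: "2*\<pi> = r1^2*u^6*M"
  proof -
    have "2*\<pi> = 3*\<alpha>*\<beta>^2 - \<sigma>^2" unfolding \<pi>_def by simp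
    also have "\<dots> = 3*(K*u^4)*(r1*u)^2 - r1^2*u^6*(2*q3-3)" unfolding a b ss by simp
    also have "\<dots> = r1^2*u^6*M" unfolding M_def by algebra
    finally show ?thesis .
  qed
  have E3: "3*\<alpha>^2*\<beta> = -2*\<sigma>*\<pi>"
  proof -
    have KK: "(8*q3-12)*M = 6*K^2" using K
    proof (elim disjE conjE)
      assume "K = q3 - 1" then show ?thesis using q unfolding M_def by algebra
    next
      assume "K = 3*q3 - 5" then show ?thesis using q unfolding M_def by algebra
    qed
    have "2*(-2*\<sigma>*\<pi>) = (r1*u)^3*(2*\<pi>)" unfolding \<sigma>_def b by (simp add: algebra_simps)
    also have "\<dots> = r1*u^9*(r1^4*M)" unfolding p2 by algebra
    also have "\<dots> = r1*u^9*(6*K^2)" unfolding r4 KK ..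
    also have "\<dots> = 2*(3*\<alpha>^2*\<beta>)" unfolding a b by algebra
    finally have "2*(-2*\<sigma>*\<pi>) = 2*(3*\<alpha>^2*\<beta>)" .
    then show ?thesis by algebra
  qed
  have E4: "1 + \<alpha>^3 = \<pi>^2"
  proof -
    have "4*\<pi>^2 = (2*\<pi>)^2" by (simp add: power2_eq_square)
    also have "\<dots> = r1^4*u^12*M^2" unfolding p2 by algebra
    also have "\<dots> = (8*q3-12)*u^12*M^2" unfolding r4 ..
    also have "\<dots> = 4*(1 + \<alpha>^3)" using K
    proof (elim disjE conjE)
      assume "K = q3 - 1" "u^12 = 1" then show ?thesis using q unfolding a M_def by algebra
    next
      assume "K = 3*q3 - 5" "u^12 = -(1351+780*q3)" then show ?thesis using q unfolding a M_def by algebra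
    qed
    finally have "4*\<pi>^2 = 4*(1 + \<alpha>^3)" .
    then show ?thesis by algebra
  qed
  have D: "\<sigma>^2 - 4*\<pi> \<noteq> 0"
  proof -
    have "\<sigma>^2 - 4*\<pi> = r1^2*u^6*(2*q3 - 3 - 2*M)" unfolding ss using p2 by algebra
    moreover have "2*q3 - 3 - 2*M \<noteq> 0"
    proof
      assume h: "2*q3 - 3 - 2*M = 0"
      from K show False
      proof (elim disjE conjE)
        assume "K = q3 - 1"
        then have "2*q3 - 3 - 2*M = -3" unfolding M_def by algebra
        then show False using h by simp
      next
        assume "K = 3*q3 - 5"
        then have "2*q3 - 3 - 2*M = 21 - 12*q3" unfolding M_def by algebra
        then show False using h q3_ne by simp
      qed
    qed
    ultimately show ?thesis using r1_nz u by simp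
  qed
  show ?thesis using bit_gen[OF E3 E4 \<sigma>_def \<pi>_def D] .
qed

lemma bit_hyp: fixes \<alpha> :: complex assumes a3: "\<alpha>^3 = -1" shows "bitangent48 (\<alpha>, 0, -1)"
proof -
  let ?p = "(1, 0, \<alpha>) :: pt3"
  have im: "int_mult (\<alpha>, 0, -1) ?p = 4"
  proof (rule im_eq4_intro)
    show "(\<alpha>, 0, -1::complex) \<noteq> (0,0,0)" by simp
    fix q assume iq: "incid (\<alpha>, 0, -1) q" and nq: "\<not> (\<exists>c. q = smult3 c ?p)"
    obtain x1 y1 z1 where q: "q = (x1,y1,z1)" by (cases q) auto
    have z1: "z1 = \<alpha>*x1" using iq q by simp
    have y1: "y1 \<noteq> 0"
    proof
      assume "y1 = 0"
      then have "q = smult3 x1 ?p" using q z1 by (simp add: algebra_simps)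
      then show False using nq by blast
    qed
    have "poly (restr48 ?p q) t = poly (monom (y1^4) 4) t" for t
    proof -
      have "poly (restr48 ?p q) t = (1+t*x1)^4*(1 + \<alpha>^3) + (t*y1)^4"
        unfolding q restr48_poly z1 F48_simp by algebra
      also have "\<dots> = poly (monom (y1^4) 4) t" using a3 by (simp add: poly_monom power_mult_distrib)
      finally show ?thesis .
    qed
    then have "restr48 ?p q = monom (y1^4) 4" by (intro poly_eq_poly_eq_iff[THEN iffD1]) auto
    then show "\<exists>c. c \<noteq> 0 \<and> restr48 ?p q = monom c 4" using y1 by auto
  qed
  have un: "\<forall>p'. p' \<noteq> (0,0,0) \<and> incid (\<alpha>, 0, -1) p' \<and> F48 p' = 0 \<longrightarrow> proj_class p' = proj_class ?p"
  proof (intro allI impI)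
    fix p' assume h: "p' \<noteq> (0,0,0) \<and> incid (\<alpha>, 0, -1) p' \<and> F48 p' = 0"
    obtain x y z where p': "p' = (x,y,z)" by (cases p') auto
    have z: "z = \<alpha>*x" using h p' by simp
    have "y^4 = 0"
    proof -
      have "F48 p' = x^4*(1+\<alpha>^3) + y^4" unfolding p' F48_simp z by algebra
      then show ?thesis using h a3 by simp
    qed
    then have y: "y = 0" by simp
    then have x: "x \<noteq> 0" using h p' z by auto
    have "p' = smult3 x ?p" using p' y z by simp
    then show "proj_class p' = proj_class ?p" using pc_eq_I x by blast
  qed
  have nz: "(\<alpha>, 0, -1::complex) \<noteq> (0,0,0)" by simp
  have "\<exists>p. p \<noteq> (0,0,0) \<and> incid (\<alpha>, 0, -1) p \<and> int_mult (\<alpha>, 0, -1) p = 4 \<and>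
     (\<forall>p'. p' \<noteq> (0,0,0) \<and> incid (\<alpha>, 0, -1) p' \<and> F48 p' = 0 \<longrightarrow> proj_class p' = proj_class p)"
  proof -
    have "?p \<noteq> (0,0,0) \<and> incid (\<alpha>, 0, -1) ?p" by simp
    then show ?thesis using im un by blast
  qed
  then show ?thesis unfolding bitangent48_def using nz by blast
qed

lemma bit_27: "bitangent48 (1, 0, 0)"
proof -
  let ?p = "(0, 0, 1) :: pt3"
  have im: "int_mult (1, 0, 0) ?p = 4"
  proof (rule im_eq4_intro)
    show "(1::complex, 0::complex, 0::complex) \<noteq> (0,0,0)" by simp
    fix q assume iq: "incid (1, 0, 0) q" and nq: "\<not> (\<exists>c. q = smult3 c ?p)"
    obtain x1 y1 z1 where q: "q = (x1,y1,z1)" by (cases q) auto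
    have x1: "x1 = 0" using iq q by simp
    have y1: "y1 \<noteq> 0"
    proof
      assume "y1 = 0"
      then have "q = smult3 z1 ?p" using q x1 by simp
      then show False using nq by blast
    qed
    have "poly (restr48 ?p q) t = poly (monom (y1^4) 4) t" for t
      unfolding q restr48_poly x1 F48_simp by (simp add: poly_monom power_mult_distrib)
    then have "restr48 ?p q = monom (y1^4) 4" by (intro poly_eq_poly_eq_iff[THEN iffD1]) auto
    then show "\<exists>c. c \<noteq> 0 \<and> restr48 ?p q = monom c 4" using y1 by auto
  qed
  have un: "\<forall>p'. p' \<noteq> (0,0,0) \<and> incid (1, 0, 0) p' \<and> F48 p' = 0 \<longrightarrow> proj_class p' = proj_class ?p"
  proof (intro allI impI)
    fix p' assume h: "p' \<noteq> (0,0,0) \<and> incid (1, 0, 0) p' \<and> F48 p' = 0"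
    obtain x y z where p': "p' = (x,y,z)" by (cases p') auto
    have x: "x = 0" using h p' by simp
    have y: "y = 0" using h p' x by simp
    have z: "z \<noteq> 0" using h p' x y by auto
    have "p' = smult3 z ?p" using p' x y by simp
    then show "proj_class p' = proj_class ?p" using pc_eq_I z by blast
  qed
  have nz: "(1::complex, 0::complex, 0::complex) \<noteq> (0,0,0)" by simp
  have "\<exists>p. p \<noteq> (0,0,0) \<and> incid (1, 0, 0) p \<and> int_mult (1, 0, 0) p = 4 \<and>
     (\<forall>p'. p' \<noteq> (0,0,0) \<and> incid (1, 0, 0) p' \<and> F48 p' = 0 \<longrightarrow> proj_class p' = proj_class p)"
  proof -
    have "?p \<noteq> (0,0,0) \<and> incid (1, 0, 0) ?p" by simp
    then show ?thesis using im un by blast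
  qed
  then show ?thesis unfolding bitangent48_def using nz by blast
qed

lemma zt_nz: "zt \<noteq> 0" using zt12 by auto

lemma bit_L: assumes "i < 28" shows "bitangent48 (L i)"
proof -
  consider "i < 12" | "12 \<le> i \<and> i < 24" | "24 \<le> i \<and> i < 27" | "i = 27" using assms by linarith
  then show ?thesis
  proof cases
    case 1
    have u12: "(zt^i)^12 = 1" by (simp add: power_mult[symmetric] mult.commute[of i] power_mult zt12)
    show ?thesis unfolding L_fam1[OF 1]
      by (rule bit_fam[of _ "q3-1" "zt^i"]) (use u12 zt_nz in auto)
  next
    case 2
    define j where "j = i - 12"
    have j: "j < 12" "i = 12 + j" using 2 j_def by auto
    have u12: "(cc*zt^j)^12 = -(1351+780*q3)"
      by (simp add: power_mult_distrib cc12 power_mult[symmetric] mult.commute[of j] power_mult zt12)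
    show ?thesis unfolding j(2) L_fam2[OF j(1)]
      by (rule bit_fam[of _ "3*q3-5" "cc*zt^j"]) (use u12 zt_nz cc_nz in auto)
  next
    case 3
    define k where "k = i - 24"
    have k: "k < 3" "i = 24 + k" using 3 k_def by auto
    have "(-(zt^(4*k)))^3 = -((zt^12)^k)" by (simp add: power_mult[symmetric] mult.commute)
    then have "(-(zt^(4*k)))^3 = -1" by (simp add: zt12)
    then show ?thesis unfolding k(2) L_hyp[OF k(1)] by (rule bit_hyp)
  next
    case 4
    then show ?thesis by (simp add: L_def bit_27)
  qed
qed

lemma solve_z: fixes a b c x y z :: complex assumes c: "c \<noteq> 0" and i: "incid (a,b,c) (x,y,z)"
  shows "z = (-a/c)*x + (-b/c)*y"
proof -
  have "a*x + b*y + c*z = 0" using i by simp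
  then have "c*z = -(a*x + b*y)" using add_eq_0_iff[of "a*x + b*y" "c*z"] by (simp add: add.assoc)
  moreover have "c * ((-a/c)*x + (-b/c)*y) = -(a*x + b*y)" using c by (simp add: field_simps)
  ultimately have "c * z = c * ((-a/c)*x + (-b/c)*y)" by simp
  then show ?thesis using c by simp
qed

lemma solve_y: fixes a b x y z :: complex assumes b: "b \<noteq> 0" and i: "incid (a,b,0) (x,y,z)"
  shows "y = (-a/b)*x"
proof -
  have "a*x + b*y = 0" using i by simp
  then have "b*y = -(a*x)" using add_eq_0_iff[of "a*x" "b*y"] by simp
  moreover have "b * ((-a/b)*x) = -(a*x)" using b by (simp add: field_simps)
  ultimately have "b * y = b * ((-a/b)*x)" by simp
  then show ?thesis using b mult_cancel_left[of b y "(-a/b)*x"] by blast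
qed

lemma tang_b:
  assumes b: "b \<noteq> 0" and p: "p = (x0,y0,z0)" and pnz: "p \<noteq> (0,0,0)"
    and ip: "incid (a,b,0) p" and iq: "incid (a,b,0) q" and nq: "\<not>(\<exists>k. q = smult3 k p)"
    and F: "F48 p = 0" and C1: "c1f p q = 0"
  shows "x0 \<noteq> 0 \<and> z0 = 0"
proof -
  obtain x1 y1 z1 where q: "q = (x1,y1,z1)" by (cases q) auto
  define \<mu> where "\<mu> = -a/b"
  have y0: "y0 = \<mu>*x0" using solve_y[OF b ip[unfolded p]] unfolding \<mu>_def .
  have y1: "y1 = \<mu>*x1" using solve_y[OF b iq[unfolded q]] unfolding \<mu>_def .
  define gx where "gx = 4*x0^3*(1+\<mu>^4) + z0^3"
  define gz where "gz = 3*x0*z0^2"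
  have e1: "gx*x1 + gz*z1 = 0"
  proof -
    have "c1f p q = gx*x1 + gz*z1" unfolding p q y0 y1 c1f_def gx_def gz_def by (simp only: prod.case) algebra
    then show ?thesis using C1 by simp
  qed
  have e2: "gx*x0 + gz*z0 = 0"
  proof -
    have "4 * F48 p = gx*x0 + gz*z0" unfolding p gx_def gz_def F48_simp y0 by algebra
    then show ?thesis using F by simp
  qed
  have det: "x0*z1 - x1*z0 \<noteq> 0"
  proof
    assume d: "x0*z1 - x1*z0 = 0"
    show False
    proof (cases "x0 = 0")
      case False
      have "q = smult3 (x1/x0) p" unfolding p q using d False
        by (simp add: y0 y1 field_simps)
      then show False using nq by blast
    next
      case True
      then have z0: "z0 \<noteq> 0" using pnz p y0 by auto
      then have "x1 = 0" using d True by simp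
      then have "q = smult3 (z1/z0) p" unfolding p q using True z0 by (simp add: y0 y1 field_simps)
      then show False using nq by blast
    qed
  qed
  have gz0: "gz = 0"
  proof -
    have "gz*(x0*z1 - x1*z0) = x0*(gx*x1 + gz*z1) - x1*(gx*x0 + gz*z0)" by (simp add: algebra_simps)
    then show ?thesis using e1 e2 det by simp
  qed
  have gx0: "gx = 0"
  proof -
    have "gx*(x0*z1 - x1*z0) = z1*(gx*x0 + gz*z0) - z0*(gx*x1 + gz*z1)" by (simp add: algebra_simps)
    then show ?thesis using e1 e2 det by simp
  qed
  have x0: "x0 \<noteq> 0"
  proof
    assume x0: "x0 = 0"
    then have "z0^3 = 0" using gx0 gx_def by simp
    then have "z0 = 0" by simp
    then show False using x0 pnz p y0 by simp
  qed
  have "z0 = 0" using gz0 x0 gz_def by simp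
  then show ?thesis using x0 by simp
qed

lemma line_scale: assumes "c \<noteq> 0" shows "proj_class (a,b,c) = proj_class (-a/c, -b/c, -1)"
  by (rule pc_eq_I[of "-c"]) (use assms in simp_all)

lemma bit_sub: assumes bt: "bitangent48 l" shows "\<exists>i<28. proj_class l = proj_class (L i)"
proof -
  obtain a b c where l: "l = (a,b,c)" by (cases l) auto
  have lnz: "l \<noteq> (0,0,0)" using bt bitangent48_def by simp
  have D: "(\<exists>p1 p2. p1 \<noteq> (0, 0, 0) \<and> p2 \<noteq> (0, 0, 0) \<and> incid l p1 \<and> incid l p2 \<and>
        proj_class p1 \<noteq> proj_class p2 \<and> int_mult l p1 \<ge> 2 \<and> int_mult l p2 \<ge> 2)
     \<or> (\<exists>p. p \<noteq> (0, 0, 0) \<and> incid l p \<and> int_mult l p = 4 \<and>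
        (\<forall>p'. p' \<noteq> (0, 0, 0) \<and> incid l p' \<and> F48 p' = 0 \<longrightarrow> proj_class p' = proj_class p))"
    using bt bitangent48_def by simp
  show ?thesis
  proof (cases "c = 0")
    case False
    define \<alpha> where "\<alpha> = -a/c"
    define \<beta> where "\<beta> = -b/c"
    have pc: "proj_class l = proj_class (\<alpha>, \<beta>, -1)" unfolding l \<alpha>_def \<beta>_def using line_scale[OF False] .
    have tg: "x0 \<noteq> 0 \<and> hh \<alpha> \<beta> (y0/x0) = 0 \<and> hh' \<alpha> \<beta> (y0/x0) = 0"
      if A: "p = (x0,y0,z0)" "p \<noteq> (0,0,0)" "incid l p" "2 \<le> int_mult l p" for p x0 y0 z0
    proof -
      obtain q where q: "incid l q" "\<not> (\<exists>c. q = smult3 c p)" "F48 p = 0" "c1f p q = 0"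
        using im_ge2[OF lnz A(4)] by blast
      show ?thesis using tang_c[OF False A(1) A(2) A(3)[unfolded l] q(1)[unfolded l] q(2) q(3) q(4)]
        unfolding \<alpha>_def \<beta>_def .
    qed
    have zl: "z = \<alpha>*x + \<beta>*y" if "incid l (x,y,z)" for x y z
      using solve_z[OF False that[unfolded l]] unfolding \<alpha>_def \<beta>_def .
    have key: "\<exists>i<28. (\<alpha>, \<beta>, -1) = L i"
      using D
    proof
      assume "\<exists>p1 p2. p1 \<noteq> (0, 0, 0) \<and> p2 \<noteq> (0, 0, 0) \<and> incid l p1 \<and> incid l p2 \<and>
        proj_class p1 \<noteq> proj_class p2 \<and> int_mult l p1 \<ge> 2 \<and> int_mult l p2 \<ge> 2"
      then obtain p1 p2 where h: "p1 \<noteq> (0, 0, 0)" "p2 \<noteq> (0, 0, 0)" "incid l p1" "incid l p2"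
        "proj_class p1 \<noteq> proj_class p2" "int_mult l p1 \<ge> 2" "int_mult l p2 \<ge> 2" by blast
      obtain x1 y1 z1 where p1: "p1 = (x1,y1,z1)" by (cases p1) auto
      obtain x2 y2 z2 where p2: "p2 = (x2,y2,z2)" by (cases p2) auto
      have t1: "x1 \<noteq> 0 \<and> hh \<alpha> \<beta> (y1/x1) = 0 \<and> hh' \<alpha> \<beta> (y1/x1) = 0" using tg[OF p1 h(1) h(3) h(6)] .
      have t2: "x2 \<noteq> 0 \<and> hh \<alpha> \<beta> (y2/x2) = 0 \<and> hh' \<alpha> \<beta> (y2/x2) = 0" using tg[OF p2 h(2) h(4) h(7)] .
      define T1 where "T1 = y1/x1"
      define T2 where "T2 = y2/x2"
      have ne: "T1 \<noteq> T2"
      proof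
        assume e: "T1 = T2"
        have z1: "z1 = \<alpha>*x1 + \<beta>*y1" using zl h(3) p1 by simp
        have z2: "z2 = \<alpha>*x2 + \<beta>*y2" using zl h(4) p2 by simp
        have "y2 = (x2/x1)*y1" using e t1 t2 unfolding T1_def T2_def by (simp add: field_simps)
        then have "p2 = smult3 (x2/x1) p1" using p1 p2 z1 z2 t1 by (simp add: field_simps)
        then have "proj_class p2 = proj_class p1" using pc_eq_I t1 t2 by simp
        then show False using h(5) by simp
      qed
      have E: "\<beta>^3 = -2*(T1+T2) \<and> 3*\<alpha>*\<beta>^2 = (T1+T2)^2 + 2*(T1*T2)
         \<and> 3*\<alpha>^2*\<beta> = -2*(T1+T2)*(T1*T2) \<and> 1 + \<alpha>^3 = (T1*T2)^2"
        using two_roots[of \<alpha> \<beta> T1 T2] t1 t2 ne unfolding T1_def T2_def by blast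
      have bnz: "\<beta> \<noteq> 0"
      proof
        assume b0: "\<beta> = 0"
        have e1: "\<beta>^3 = -2*(T1+T2)" and e2: "3*\<alpha>*\<beta>^2 = (T1+T2)^2 + 2*(T1*T2)" using E by auto
        have h0: "-T1 = T2" using e1 b0 by simp
        have s0: "T1 + T2 = 0" by (simp add: h0[symmetric])
        have "T1*T2 = 0" using e2 b0 s0 by simp
        then have "T2 * T2 = 0" using s0 by (simp add: eq_neg_iff_add_eq_0[symmetric])
        then have "T2 = 0" by simp
        then have "T1 = 0" using s0 by simp
        then show False using ne \<open>T2 = 0\<close> by simp
      qed
      show ?thesis using ident_fam[of \<beta> "T1+T2" \<alpha> "T1*T2"] E bnz by blast
    next
      assume "\<exists>p. p \<noteq> (0, 0, 0) \<and> incid l p \<and> int_mult l p = 4 \<and>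
        (\<forall>p'. p' \<noteq> (0, 0, 0) \<and> incid l p' \<and> F48 p' = 0 \<longrightarrow> proj_class p' = proj_class p)"
      then obtain p where h: "p \<noteq> (0, 0, 0)" "incid l p" "int_mult l p = 4"
        "\<forall>p'. p' \<noteq> (0, 0, 0) \<and> incid l p' \<and> F48 p' = 0 \<longrightarrow> proj_class p' = proj_class p" by blast
      obtain x0 y0 z0 where p: "p = (x0,y0,z0)" by (cases p) auto
      define t0 where "t0 = y0/x0"
      have t: "x0 \<noteq> 0 \<and> hh \<alpha> \<beta> t0 = 0 \<and> hh' \<alpha> \<beta> t0 = 0" using tg[OF p h(1) h(2)] h(3) t0_def by simp
      define e1 where "e1 = \<beta>^3 + 2*t0"
      define e0 where "e0 = 3*\<alpha>*\<beta>^2 + 2*t0*e1 - t0^2"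
      have fac: "hh \<alpha> \<beta> t = (t-t0)^2*(t^2 + e1*t + e0) + hh \<alpha> \<beta> t0 + hh' \<alpha> \<beta> t0 * (t - t0)" for t
        unfolding hh_def hh'_def e1_def e0_def by algebra
      have root_eq: "s = t0" if s: "s^2 + e1*s + e0 = 0" for s
      proof -
        have "hh \<alpha> \<beta> s = 0" using fac[of s] s t by simp
        moreover have "F48 (1, s, \<alpha> + \<beta>*s) = hh \<alpha> \<beta> s"
          unfolding hh_def F48_simp by (simp add: power2_eq_square power3_eq_cube power4_eq_xxxx algebra_simps)
        moreover have "incid l (1, s, \<alpha> + \<beta>*s)" unfolding l \<alpha>_def \<beta>_def using False by (simp add: field_simps)
        ultimately have "proj_class (1, s, \<alpha> + \<beta>*s) = proj_class p" using h(4) by auto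
        then obtain k where "p = smult3 k (1, s, \<alpha> + \<beta>*s)" using pc_eq_D by metis
        then have "x0 = k" "y0 = k*s" using p by auto
        then show "s = t0" using t t0_def by simp
      qed
      define d where "d = csqrt (e1^2 - 4*e0)"
      have d2: "d^2 = e1^2 - 4*e0" unfolding d_def by simp
      have r1: "((-e1+d)/2)^2 + e1*((-e1+d)/2) + e0 = 0" using d2 by (simp add: field_simps power2_eq_square; algebra)
      have r2: "((-e1-d)/2)^2 + e1*((-e1-d)/2) + e0 = 0" using d2 by (simp add: field_simps power2_eq_square; algebra)
      have s1: "(-e1+d)/2 = t0" using root_eq[OF r1] .
      have s2: "(-e1-d)/2 = t0" using root_eq[OF r2] .
      have ee1: "e1 = -2*t0" using s1 s2 by (simp add: field_simps; algebra)
      have dd: "d = 0" using s1 s2 by (simp add: field_simps; algebra)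
      have ee0: "e0 = t0^2" using d2 dd ee1 by (simp add: power2_eq_square; algebra)
      have th: "hh \<alpha> \<beta> t0 = 0" and th': "hh' \<alpha> \<beta> t0 = 0" using t by auto
      have c3: "\<beta>^3 = -4*t0" using ee1 e1_def by algebra
      have c2: "3*\<alpha>*\<beta>^2 = 6*t0^2" using ee0 ee1 e0_def by algebra
      have c1: "3*\<alpha>^2*\<beta> = -4*t0^3" using th' c3 c2 unfolding hh'_def by algebra
      have c0: "1 + \<alpha>^3 = t0^4" using th c3 c2 c1 unfolding hh_def by algebra
      have "t0^4 = 0" using c3 c2 c1 by algebra
      then have t00: "t0 = 0" by simp
      then have "\<beta>^3 = 0" using c3 by simp
      then have "\<beta> = 0" by simp
      moreover have "\<alpha>^3 = -1" using c0 t00 by algebra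
      ultimately show ?thesis using ident_hyp by simp
    qed
    then show ?thesis using pc by auto
  next
    case c0: True
    show ?thesis
    proof (cases "b = 0")
      case True
      then have a: "a \<noteq> 0" using lnz l c0 by auto
      have "proj_class l = proj_class (1,0,0)" unfolding l c0 True by (rule pc_eq_I[of a]) (use a in simp_all)
      then show ?thesis by (intro exI[of _ 27]) (simp add: L_def)
    next
      case bnz: False
      have tgb: "x0 \<noteq> 0 \<and> z0 = 0" if A: "p = (x0,y0,z0)" "p \<noteq> (0,0,0)" "incid l p" "2 \<le> int_mult l p" for p x0 y0 z0
      proof -
        obtain q where q: "incid l q" "\<not> (\<exists>c. q = smult3 c p)" "F48 p = 0" "c1f p q = 0"
          using im_ge2[OF lnz A(4)] by blast
        show ?thesis using tang_b[OF bnz A(1) A(2) A(3)[unfolded l c0] q(1)[unfolded l c0] q(2) q(3) q(4)] .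
      qed
      have yl: "y = (-a/b)*x" if "incid l (x,y,z)" for x y z
        using solve_y[OF bnz that[unfolded l c0]] .
      have False using D
      proof
        assume "\<exists>p1 p2. p1 \<noteq> (0, 0, 0) \<and> p2 \<noteq> (0, 0, 0) \<and> incid l p1 \<and> incid l p2 \<and>
          proj_class p1 \<noteq> proj_class p2 \<and> int_mult l p1 \<ge> 2 \<and> int_mult l p2 \<ge> 2"
        then obtain p1 p2 where h: "p1 \<noteq> (0, 0, 0)" "p2 \<noteq> (0, 0, 0)" "incid l p1" "incid l p2"
          "proj_class p1 \<noteq> proj_class p2" "int_mult l p1 \<ge> 2" "int_mult l p2 \<ge> 2" by blast
        obtain x1 y1 z1 where p1: "p1 = (x1,y1,z1)" by (cases p1) auto
        obtain x2 y2 z2 where p2: "p2 = (x2,y2,z2)" by (cases p2) auto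
        have t1: "x1 \<noteq> 0 \<and> z1 = 0" using tgb[OF p1 h(1) h(3) h(6)] .
        have t2: "x2 \<noteq> 0 \<and> z2 = 0" using tgb[OF p2 h(2) h(4) h(7)] .
        have "y1 = (-a/b)*x1" using yl h(3) p1 by simp
        moreover have "y2 = (-a/b)*x2" using yl h(4) p2 by simp
        ultimately have "p2 = smult3 (x2/x1) p1" using p1 p2 t1 t2 by simp
        then have "proj_class p2 = proj_class p1" using pc_eq_I t1 t2 by simp
        then show False using h(5) by simp
      next
        assume "\<exists>p. p \<noteq> (0, 0, 0) \<and> incid l p \<and> int_mult l p = 4 \<and>
          (\<forall>p'. p' \<noteq> (0, 0, 0) \<and> incid l p' \<and> F48 p' = 0 \<longrightarrow> proj_class p' = proj_class p)"
        then obtain p where h: "p \<noteq> (0, 0, 0)" "incid l p" "int_mult l p = 4"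
          "\<forall>p'. p' \<noteq> (0, 0, 0) \<and> incid l p' \<and> F48 p' = 0 \<longrightarrow> proj_class p' = proj_class p" by blast
        obtain x0 y0 z0 where p: "p = (x0,y0,z0)" by (cases p) auto
        have t: "x0 \<noteq> 0 \<and> z0 = 0" using tgb[OF p h(1) h(2)] h(3) by simp
        have "proj_class (0,0,1) = proj_class p" using h(4) l c0 by simp
        then obtain k where "p = smult3 k (0,0,1)" using pc_eq_D by metis
        then show False using p t by simp
      qed
      then show ?thesis ..
    qed
  qed
qed

definition cross :: "pt3 \<Rightarrow> pt3 \<Rightarrow> pt3" where
  "cross l m = (case l of (l1,l2,l3) \<Rightarrow> case m of (m1,m2,m3) \<Rightarrow>
     (l2*m3 - l3*m2, l3*m1 - l1*m3, l1*m2 - l2*m1))"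

definition det3 :: "pt3 \<Rightarrow> pt3 \<Rightarrow> pt3 \<Rightarrow> complex" where
  "det3 l m n = (case n of (a,b,c) \<Rightarrow> case cross l m of (x,y,z) \<Rightarrow> a*x + b*y + c*z)"

lemma cross_simp: "cross (l1,l2,l3) (m1,m2,m3) = (l2*m3 - l3*m2, l3*m1 - l1*m3, l1*m2 - l2*m1)"
  by (simp add: cross_def)

lemma incid_cross: "incid n (cross l m) \<longleftrightarrow> det3 l m n = 0"
  by (cases n; cases l; cases m) (simp add: det3_def cross_def)

lemma cross_incid: "incid l (cross l m) \<and> incid m (cross l m)"
  by (cases l; cases m) (simp add: cross_def algebra_simps)

lemma cross_swap: "cross m l = smult3 (-1) (cross l m)"
  by (cases l; cases m) (simp add: cross_def algebra_simps)

lemma prop_cross: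
  assumes n: "cross l m \<noteq> (0,0,0)" and p: "p \<noteq> (0,0,0)" and il: "incid l p" and im: "incid m p"
  shows "\<exists>k. k \<noteq> 0 \<and> p = smult3 k (cross l m)"
proof -
  obtain l1 l2 l3 where l: "l = (l1,l2,l3)" by (cases l) auto
  obtain m1 m2 m3 where m: "m = (m1,m2,m3)" by (cases m) auto
  obtain p1 p2 p3 where pp: "p = (p1,p2,p3)" by (cases p) auto
  define n1 where "n1 = l2*m3 - l3*m2"
  define n2 where "n2 = l3*m1 - l1*m3"
  define n3 where "n3 = l1*m2 - l2*m1"
  have cr: "cross l m = (n1,n2,n3)" unfolding l m n1_def n2_def n3_def cross_def by simp
  have e1: "l1*p1 + l2*p2 + l3*p3 = 0" using il l pp by simp
  have e2: "m1*p1 + m2*p2 + m3*p3 = 0" using im m pp by simp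
  have x1: "p2*n3 - p3*n2 = 0" unfolding n2_def n3_def using e1 e2 by algebra
  have x2: "p3*n1 - p1*n3 = 0" unfolding n1_def n3_def using e1 e2 by algebra
  have x3: "p1*n2 - p2*n1 = 0" unfolding n1_def n2_def using e1 e2 by algebra
  have nz: "n1 \<noteq> 0 \<or> n2 \<noteq> 0 \<or> n3 \<noteq> 0" using n cr by auto
  have "\<exists>k. p = smult3 k (n1,n2,n3)"
  proof -
    { assume h: "n1 \<noteq> 0"
      have "p = smult3 (p1/n1) (n1,n2,n3)" using h x2 x3 pp by (simp add: field_simps)
      then have ?thesis by blast }
    moreover
    { assume h: "n2 \<noteq> 0"
      have "p = smult3 (p2/n2) (n1,n2,n3)" using h x1 x3 pp by (simp add: field_simps)
      then have ?thesis by blast }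
    moreover
    { assume h: "n3 \<noteq> 0"
      have "p = smult3 (p3/n3) (n1,n2,n3)" using h x1 x2 pp by (simp add: field_simps)
      then have ?thesis by blast }
    ultimately show ?thesis using nz by blast
  qed
  then obtain k where k: "p = smult3 k (n1,n2,n3)" by blast
  then have "k \<noteq> 0" using p by auto
  then show ?thesis using k cr by auto
qed

lemma incid_smult: "incid l (smult3 k p) \<longleftrightarrow> k = 0 \<or> incid l p"
proof -
  obtain a b c where l: "l = (a,b,c)" by (cases l) auto
  obtain x y z where p: "p = (x,y,z)" by (cases p) auto
  have "a*(k*x)+b*(k*y)+c*(k*z) = k*(a*x+b*y+c*z)" by (simp add: algebra_simps)
  then show ?thesis unfolding l p by simp
qed

lemma conc_det: assumes "cross l m \<noteq> (0,0,0)"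
  shows "(\<exists>p. p \<noteq> (0,0,0) \<and> incid l p \<and> incid m p \<and> incid n p) \<longleftrightarrow> det3 l m n = 0"
proof
  assume "\<exists>p. p \<noteq> (0,0,0) \<and> incid l p \<and> incid m p \<and> incid n p"
  then obtain p where h: "p \<noteq> (0,0,0)" "incid l p" "incid m p" "incid n p" by blast
  obtain k where k: "k \<noteq> 0" "p = smult3 k (cross l m)" using prop_cross[OF assms h(1) h(2) h(3)] by blast
  have "incid n (cross l m)" using h(4) k incid_smult by simp
  then show "det3 l m n = 0" using incid_cross by simp
next
  assume "det3 l m n = 0"
  then show "\<exists>p. p \<noteq> (0,0,0) \<and> incid l p \<and> incid m p \<and> incid n p"
    using assms cross_incid incid_cross by blast
qed

lemma same_point: assumes "cross l m \<noteq> (0,0,0)" "p \<noteq> (0,0,0)" "incid l p" "incid m p"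
  "p' \<noteq> (0,0,0)" "incid l p'" "incid m p'" shows "proj_class p = proj_class p'"
proof -
  obtain k where k: "k \<noteq> 0" "p = smult3 k (cross l m)" using prop_cross assms(1-4) by blast
  obtain k' where k': "k' \<noteq> 0" "p' = smult3 k' (cross l m)" using prop_cross assms(1,5-7) by blast
  have "proj_class p = proj_class (cross l m)" using pc_eq_I k by blast
  moreover have "proj_class p' = proj_class (cross l m)" using pc_eq_I k' by blast
  ultimately show ?thesis by simp
qed

lemma R_distinct: "\<forall>b<27. \<forall>a<b. R a \<noteq> R b"
  by (simp add: all_lt_num R_simps)

lemma L_lt27: "a < 27 \<Longrightarrow> L a = (emb (fst (R a)), r1 * emb (snd (R a)), -1)"
  by (simp add: L_def)

lemma cross_L_aux: assumes "a < 27" "b < 27" "a \<noteq> b" shows "cross (L a) (L b) \<noteq> (0,0,0)"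
proof
  assume h: "cross (L a) (L b) = (0,0,0)"
  have "r1 * (emb (snd (R b)) - emb (snd (R a))) = 0" "emb (fst (R a)) - emb (fst (R b)) = 0"
    using h unfolding L_lt27[OF assms(1)] L_lt27[OF assms(2)] cross_simp by (simp_all add: algebra_simps)
  then have "emb (snd (R b)) = emb (snd (R a))" "emb (fst (R a)) = emb (fst (R b))" using r1_nz by auto
  then have "R a = R b" using emb_inj by (metis prod_eqI)
  then show False using R_distinct assms by (metis linorder_neqE_nat)
qed

lemma cross_L: assumes "a < 28" "b < 28" "a \<noteq> b" shows "cross (L a) (L b) \<noteq> (0,0,0)"
proof (cases "a = 27 \<or> b = 27")
  case False
  then show ?thesis using cross_L_aux assms by simp
next
  case True
  then show ?thesis
  proof
    assume a: "a = 27"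
    then have "b < 27" using assms by simp
    then show ?thesis unfolding a L_lt27[OF \<open>b < 27\<close>] by (simp add: L_def cross_simp)
  next
    assume b: "b = 27"
    then have "a < 27" using assms by simp
    then show ?thesis unfolding b L_lt27[OF \<open>a < 27\<close>] by (simp add: L_def cross_simp)
  qed
qed

lemma emb_zcol: "emb (zcol (A0,B0) (A1,B1) (A2,B2)) =
    (emb A1 - emb A0)*(emb B2 - emb B0) - (emb A2 - emb A0)*(emb B1 - emb B0)"
  by (simp add: emb_sub emb_mul)

lemma det_L: assumes "a < b" "b < c" "c < 28" shows "det3 (L a) (L b) (L c) = 0 \<longleftrightarrow> zzT a b c"
proof -
  have a: "a < 27" and b: "b < 27" using assms by auto
  obtain A0 B0 where Ra: "R a = (A0,B0)" by (cases "R a") auto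
  obtain A1 B1 where Rb: "R b = (A1,B1)" by (cases "R b") auto
  show ?thesis
  proof (cases "c = 27")
    case True
    have "det3 (L a) (L b) (L c) = r1 * emb (zsub (snd (R b)) (snd (R a)))"
      unfolding True L_lt27[OF a] L_lt27[OF b] Ra Rb by (simp add: L_def det3_def cross_simp emb_sub algebra_simps)
    then show ?thesis using r1_nz True by (simp add: zzT_def emb_eq0)
  next
    case False
    then have c: "c < 27" using assms by simp
    obtain A2 B2 where Rc: "R c = (A2,B2)" by (cases "R c") auto
    have "det3 (L a) (L b) (L c) = -(r1 * emb (zcol (R a) (R b) (R c)))"
      unfolding L_lt27[OF a] L_lt27[OF b] L_lt27[OF c] Ra Rb Rc emb_zcol
      by (simp add: det3_def cross_simp algebra_simps)
    then show ?thesis using r1_nz False by (simp add: zzT_def emb_eq0)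
  qed
qed

lemma T_all: "\<forall>c<28. \<forall>b<c. \<forall>a<b. zzT a b c = (c \<in> set (B a b))"
  by (simp add: all_lt_num zzT_def R_simps B_simps B_0_1s)

lemma B_props: "\<forall>b<28. \<forall>a<b. sorted (B a b) \<and> distinct (B a b) \<and> a \<in> set (B a b) \<and> b \<in> set (B a b)
   \<and> (\<forall>x\<in>set (B a b). x < 28) \<and> length (B a b) \<le> 4
   \<and> (\<forall>y\<in>set (B a b). \<forall>x\<in>set (B a b). x < y \<longrightarrow> B x y = B a b)"
  by (simp add: all_lt_num B_simps B_0_1s)

lemma Bp: assumes "a < b" "b < 28"
  shows "sorted (B a b)" "distinct (B a b)" "a \<in> set (B a b)" "b \<in> set (B a b)"
    "\<And>x. x \<in> set (B a b) \<Longrightarrow> x < 28" "length (B a b) \<le> 4"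
    "\<And>x y. x \<in> set (B a b) \<Longrightarrow> y \<in> set (B a b) \<Longrightarrow> x < y \<Longrightarrow> B x y = B a b"
  using B_props assms by blast+

definition conc3 :: "nat \<Rightarrow> nat \<Rightarrow> nat \<Rightarrow> bool" where
  "conc3 i j k \<longleftrightarrow> (\<exists>p. p \<noteq> (0,0,0) \<and> incid (L i) p \<and> incid (L j) p \<and> incid (L k) p)"

lemma conc3_perm: "conc3 i j k = conc3 j i k" "conc3 i j k = conc3 i k j"
  unfolding conc3_def by blast+

lemma conc_iff: assumes "a < b" "b < c" "c < 28" shows "conc3 a b c \<longleftrightarrow> c \<in> set (B a b)"
proof -
  have cr: "cross (L a) (L b) \<noteq> (0,0,0)" using cross_L assms by simp
  have "conc3 a b c \<longleftrightarrow> det3 (L a) (L b) (L c) = 0" unfolding conc3_def using conc_det[OF cr] by simp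
  also have "\<dots> \<longleftrightarrow> zzT a b c" using det_L[OF assms] .
  also have "\<dots> \<longleftrightarrow> c \<in> set (B a b)" using T_all assms by simp
  finally show ?thesis .
qed

lemma conc_ord: assumes ij: "i < j" "j < 28" and k: "k < 28" "k \<noteq> i" "k \<noteq> j"
  shows "conc3 i j k \<longleftrightarrow> k \<in> set (B i j)"
proof -
  consider "j < k" | "i < k \<and> k < j" | "k < i" using k by linarith
  then show ?thesis
  proof cases
    case 1 then show ?thesis using conc_iff ij k by simp
  next
    case 2
    then have ik: "i < k" "k < 28" and kj: "k < j" using ij by auto
    have "conc3 i j k \<longleftrightarrow> j \<in> set (B i k)" using conc3_perm conc_iff[of i k j] 2 ij by simp
    also have "\<dots> \<longleftrightarrow> k \<in> set (B i j)"
    proof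
      assume "j \<in> set (B i k)"
      then have "B i j = B i k" using Bp(7)[OF ik, of i j] Bp(3)[OF ik] ij by simp
      then show "k \<in> set (B i j)" using Bp(4)[OF ik] by simp
    next
      assume "k \<in> set (B i j)"
      then have "B i k = B i j" using Bp(7)[OF ij, of i k] Bp(3)[OF ij] ik by simp
      then show "j \<in> set (B i k)" using Bp(4)[OF ij] by simp
    qed
    finally show ?thesis .
  next
    case 3
    then have ki: "k < i" "i < 28" using ij by auto
    have "conc3 i j k \<longleftrightarrow> conc3 k i j" using conc3_perm by metis
    also have "\<dots> \<longleftrightarrow> j \<in> set (B k i)" using conc_iff[of k i j] 3 ij by simp
    also have "\<dots> \<longleftrightarrow> k \<in> set (B i j)"
    proof
      assume "j \<in> set (B k i)"
      then have "B i j = B k i" using Bp(7)[OF ki, of i j] Bp(4)[OF ki] ij by simp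
      then show "k \<in> set (B i j)" using Bp(3)[OF ki] by simp
    next
      assume "k \<in> set (B i j)"
      then have "B k i = B i j" using Bp(7)[OF ij, of k i] Bp(3)[OF ij] ki by simp
      then show "j \<in> set (B k i)" using Bp(4)[OF ij] by simp
    qed
    finally show ?thesis .
  qed
qed

definition S :: "pt3 \<Rightarrow> nat set" where "S p = {k. k < 28 \<and> incid (L k) p}"

lemma K: assumes p: "p \<noteq> (0,0,0)" and ij: "i < j" "j < 28" and ip: "incid (L i) p" "incid (L j) p"
  shows "S p = set (B i j)"
proof
  show "S p \<subseteq> set (B i j)"
  proof
    fix k assume "k \<in> S p"
    then have k: "k < 28" "incid (L k) p" unfolding S_def by auto
    show "k \<in> set (B i j)"
    proof (cases "k = i \<or> k = j")
      case True then show ?thesis using Bp(3,4)[OF ij] by auto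
    next
      case False
      have "conc3 i j k" unfolding conc3_def using p ip k by blast
      then show ?thesis using conc_ord ij k False by blast
    qed
  qed
next
  show "set (B i j) \<subseteq> S p"
  proof
    fix k assume kB: "k \<in> set (B i j)"
    then have k: "k < 28" using Bp(5)[OF ij] by simp
    have "incid (L k) p"
    proof (cases "k = i \<or> k = j")
      case True then show ?thesis using ip by auto
    next
      case False
      have "conc3 i j k" using conc_ord ij k False kB by blast
      then obtain p' where p': "p' \<noteq> (0,0,0)" "incid (L i) p'" "incid (L j) p'" "incid (L k) p'"
        unfolding conc3_def by blast
      have cr: "cross (L i) (L j) \<noteq> (0,0,0)" using cross_L ij by simp
      have "proj_class p' = proj_class p" using same_point[OF cr p'(1-3) p ip] .
      then obtain c where c: "c \<noteq> 0" "p = smult3 c p'" using pc_eq_D by blast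
      then show ?thesis using p'(4) incid_smult by simp
    qed
    then show "k \<in> S p" using k unfolding S_def by simp
  qed
qed

lemma S_class: assumes "proj_class p = proj_class p'" shows "S p = S p'"
proof -
  obtain c where "c \<noteq> 0" "p' = smult3 c p" using pc_eq_D assms by blast
  then show ?thesis unfolding S_def using incid_smult by simp
qed

lemma BA: "bitangent_arr = (\<lambda>i. proj_class (L i)) ` {..<28}"
proof
  show "bitangent_arr \<subseteq> (\<lambda>i. proj_class (L i)) ` {..<28}"
    unfolding bitangent_arr_def using bit_sub by fastforce
  show "(\<lambda>i. proj_class (L i)) ` {..<28} \<subseteq> bitangent_arr"
    unfolding bitangent_arr_def using bit_L by blast
qed

lemma incid_smult_l: "incid (smult3 k l) p \<longleftrightarrow> k = 0 \<or> incid l p"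
proof -
  obtain a b c where l: "l = (a,b,c)" by (cases l) auto
  obtain x y z where p: "p = (x,y,z)" by (cases p) auto
  have "(k*a)*x+(k*b)*y+(k*c)*z = k*(a*x+b*y+c*z)" by (simp add: algebra_simps)
  then show ?thesis unfolding l p by simp
qed

lemma mem_pc: "x \<in> proj_class p \<longleftrightarrow> (\<exists>c. c \<noteq> 0 \<and> x = smult3 c p)"
  unfolding proj_class_def by blast

lemma pc_incid: "(\<exists>l\<in>proj_class m. \<exists>q\<in>proj_class p. incid l q) \<longleftrightarrow> incid m p"
proof
  assume "\<exists>l\<in>proj_class m. \<exists>q\<in>proj_class p. incid l q"
  then obtain l q where lq: "l \<in> proj_class m" "q \<in> proj_class p" "incid l q" by blast
  obtain c where c: "c \<noteq> 0" "l = smult3 c m" using lq(1) mem_pc by blast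
  obtain d where d: "d \<noteq> 0" "q = smult3 d p" using lq(2) mem_pc by blast
  have "incid (smult3 c m) (smult3 d p)" using lq(3) c d by simp
  then show "incid m p" using incid_smult incid_smult_l c d by simp
next
  assume "incid m p"
  moreover have "m \<in> proj_class m" unfolding mem_pc by (intro exI[of _ 1]) (simp add: smult3_1)
  moreover have "p \<in> proj_class p" unfolding mem_pc by (intro exI[of _ 1]) (simp add: smult3_1)
  ultimately show "\<exists>l\<in>proj_class m. \<exists>q\<in>proj_class p. incid l q" by blast
qed

lemma lt_img: "lines_through bitangent_arr (proj_class p) = (\<lambda>i. proj_class (L i)) ` S p"
proof -
  have "lines_through bitangent_arr (proj_class p) = (\<lambda>i. proj_class (L i)) `
      {i \<in> {..<28}. \<exists>l\<in>proj_class (L i). \<exists>q\<in>proj_class p. incid l q}"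
    unfolding lines_through_def BA by blast
  also have "{i \<in> {..<28}. \<exists>l\<in>proj_class (L i). \<exists>q\<in>proj_class p. incid l q} = S p"
    unfolding S_def pc_incid by auto
  finally show ?thesis .
qed

lemma cross_self: "cross l l = (0,0,0)" by (cases l) (simp add: cross_def algebra_simps)
lemma cross_smult: "cross l (smult3 c m) = smult3 c (cross l m)"
  by (cases l; cases m) (simp add: cross_def algebra_simps)

lemma inj_L: "inj_on (\<lambda>i. proj_class (L i)) {..<28}"
proof (rule inj_onI)
  fix i j assume ij: "i \<in> {..<28}" "j \<in> {..<28}" "proj_class (L i) = proj_class (L j)"
  show "i = j"
  proof (rule ccontr)
    assume ne: "i \<noteq> j"
    obtain c where "L j = smult3 c (L i)" using pc_eq_D ij(3) by blast
    then have "cross (L i) (L j) = (0,0,0)" by (simp add: cross_smult cross_self)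
    then show False using cross_L ij ne by simp
  qed
qed

lemma S_sub: "S p \<subseteq> {..<28}" unfolding S_def by auto

lemma card_lt: "card (lines_through bitangent_arr (proj_class p)) = card (S p)"
  unfolding lt_img by (rule card_image) (rule inj_on_subset[OF inj_L S_sub])

lemma two_elems: assumes "2 \<le> card (S p)" shows "\<exists>x y. x \<in> S p \<and> y \<in> S p \<and> x < y"
proof -
  have fin: "finite (S p)" using S_sub finite_subset by blast
  have "\<not> (\<forall>a\<in>S p. \<forall>b\<in>S p. a = b)" using assms card_le_Suc0_iff_eq[OF fin] by auto
  then obtain a b where "a \<in> S p" "b \<in> S p" "a \<noteq> b" by blast
  then show ?thesis by (metis linorder_neqE_nat)
qed

lemma S_le4: assumes "p \<noteq> (0,0,0)" shows "card (S p) \<le> 4"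
proof (cases "2 \<le> card (S p)")
  case True
  then obtain x y where xy: "x \<in> S p" "y \<in> S p" "x < y" using two_elems by blast
  have y: "y < 28" and ix: "incid (L x) p" and iy: "incid (L y) p" using xy unfolding S_def by auto
  have "S p = set (B x y)" using K[OF assms xy(3) y ix iy] .
  then show ?thesis using Bp(6)[OF xy(3) y] card_length[of "B x y"] by simp
qed simp

definition Can :: "nat \<Rightarrow> (nat \<times> nat) set" where
  "Can k = {(a,b). a < b \<and> b < 28 \<and> B a b ! 0 = a \<and> B a b ! 1 = b \<and> length (B a b) = k}"

lemma sorted_distinct_lt: assumes "sorted xs" "distinct xs" "i < j" "j < length xs" shows "xs ! i < xs ! j"
proof -
  have "sorted_wrt (<) xs" using assms(1,2) strict_sorted_iff by blast
  then show ?thesis using sorted_wrt_nth_less assms(3,4) by blast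
qed

lemma main_count: assumes k: "2 \<le> k"
  shows "card {P \<in> P2. card (lines_through bitangent_arr P) = k} = card (Can k)"
proof -
  define f where "f = (\<lambda>(a::nat,b::nat). proj_class (cross (L a) (L b)))"
  have cS: "S (cross (L a) (L b)) = set (B a b)" if "a < b" "b < 28" for a b
    using K[of "cross (L a) (L b)" a b] cross_L cross_incid that by simp
  have "bij_betw f (Can k) {P \<in> P2. card (lines_through bitangent_arr P) = k}"
  proof (rule bij_betw_imageI)
    show "inj_on f (Can k)"
    proof (rule inj_onI)
      fix x y assume x: "x \<in> Can k" and y: "y \<in> Can k" and e: "f x = f y"
      obtain a b where xab: "x = (a,b)" by (cases x) auto
      obtain a' b' where yab: "y = (a',b')" by (cases y) auto
      have h: "a < b" "b < 28" "B a b ! 0 = a" "B a b ! 1 = b" using x xab Can_def by auto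
      have h': "a' < b'" "b' < 28" "B a' b' ! 0 = a'" "B a' b' ! 1 = b'" using y yab Can_def by auto
      have "proj_class (cross (L a) (L b)) = proj_class (cross (L a') (L b'))" using e unfolding xab yab f_def by simp
      then have "S (cross (L a) (L b)) = S (cross (L a') (L b'))" by (rule S_class)
      then have "set (B a b) = set (B a' b')" using cS h h' by simp
      then have "B a b = B a' b'"
        by (rule sorted_distinct_set_unique[OF Bp(1)[OF h(1,2)] Bp(2)[OF h(1,2)] Bp(1)[OF h'(1,2)] Bp(2)[OF h'(1,2)]])
      then show "x = y" using xab yab h h' by simp
    qed
  next
    show "f ` Can k = {P \<in> P2. card (lines_through bitangent_arr P) = k}"
    proof
      show "f ` Can k \<subseteq> {P \<in> P2. card (lines_through bitangent_arr P) = k}"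
      proof
        fix P assume "P \<in> f ` Can k"
        then obtain x where x: "x \<in> Can k" "P = f x" by blast
        obtain a b where "x = (a,b)" by (cases x) auto
        then have ab: "(a,b) \<in> Can k" "P = f (a,b)" using x by auto
        have h: "a < b" "b < 28" "length (B a b) = k" using ab Can_def by auto
        have cr: "cross (L a) (L b) \<noteq> (0,0,0)" using cross_L h by simp
        have "P = proj_class (cross (L a) (L b))" using ab(2) f_def by simp
        then have "P \<in> P2" unfolding P2_def using cr by blast
        moreover have "card (lines_through bitangent_arr P) = k"
        proof -
          have "card (lines_through bitangent_arr P) = card (S (cross (L a) (L b)))" using ab(2) card_lt f_def by simp
          also have "\<dots> = card (set (B a b))" using cS h by simp
          also have "\<dots> = length (B a b)" by (rule distinct_card[OF Bp(2)[OF h(1,2)]])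
          finally show ?thesis using h by simp
        qed
        ultimately show "P \<in> {P \<in> P2. card (lines_through bitangent_arr P) = k}" by simp
      qed
    next
      show "{P \<in> P2. card (lines_through bitangent_arr P) = k} \<subseteq> f ` Can k"
      proof
        fix P assume P: "P \<in> {P \<in> P2. card (lines_through bitangent_arr P) = k}"
        then obtain p where p: "p \<noteq> (0,0,0)" "P = proj_class p" unfolding P2_def by auto
        have cS': "card (S p) = k" using P p card_lt by simp
        then have "2 \<le> card (S p)" using k by simp
        then obtain x y where xy: "x \<in> S p" "y \<in> S p" "x < y" using two_elems by blast
        have y: "y < 28" and ix: "incid (L x) p" and iy: "incid (L y) p" using xy unfolding S_def by auto
        have Sxy: "S p = set (B x y)" using K[OF p(1) xy(3) y ix iy] .
        have "card (set (B x y)) = length (B x y)" by (rule distinct_card[OF Bp(2)[OF xy(3) y]])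
        then have len: "length (B x y) = k" using Sxy cS' by simp
        define a where "a = B x y ! 0"
        define b where "b = B x y ! 1"
        have ab: "a < b" unfolding a_def b_def
          by (rule sorted_distinct_lt[OF Bp(1)[OF xy(3) y] Bp(2)[OF xy(3) y]]) (use len k in simp_all)
        have aS: "a \<in> S p" "b \<in> S p" unfolding Sxy a_def b_def using len k by simp_all
        have b28: "b < 28" and ia: "incid (L a) p" and ib: "incid (L b) p" using aS unfolding S_def by auto
        have Sab: "S p = set (B a b)" using K[OF p(1) ab b28 ia ib] .
        have "set (B a b) = set (B x y)" using Sab Sxy by simp
        then have "B a b = B x y"
          by (rule sorted_distinct_set_unique[OF Bp(1)[OF ab b28] Bp(2)[OF ab b28] Bp(1)[OF xy(3) y] Bp(2)[OF xy(3) y]])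
        then have inC: "(a,b) \<in> Can k" unfolding Can_def using ab b28 len a_def b_def by simp
        have cr: "cross (L a) (L b) \<noteq> (0,0,0)" using cross_L ab b28 by simp
        have "proj_class (cross (L a) (L b)) = proj_class p"
          using same_point[OF cr _ _ _ p(1) ia ib] cross_incid cr by blast
        then have "f (a,b) = P" unfolding f_def using p by simp
        then show "P \<in> f ` Can k" using inC by force
      qed
    qed
  qed
  then show ?thesis by (simp add: bij_betw_same_card)
qed

lemma card_pairs: "card {(a,b). a < b \<and> b < (n::nat) \<and> Q a b} = (\<Sum>b<n. \<Sum>a<b. if Q a b then 1 else (0::nat))"
proof (induction n)
  case 0 then show ?case by simp
next
  case (Suc n)
  have eq: "{(a,b). a < b \<and> b < Suc n \<and> Q a b} = {(a,b). a < b \<and> b < n \<and> Q a b} \<union> (\<lambda>a. (a,n)) ` {a. a < n \<and> Q a n}"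
    by (auto simp: less_Suc_eq image_iff)
  have fin1: "finite {(a,b). a < b \<and> b < n \<and> Q a b}"
    by (rule finite_subset[of _ "{..<n} \<times> {..<n}"]) auto
  have fin2: "finite ((\<lambda>a. (a,n)) ` {a. a < n \<and> Q a n})" by simp
  have disj: "{(a,b). a < b \<and> b < n \<and> Q a b} \<inter> (\<lambda>a. (a,n)) ` {a. a < n \<and> Q a n} = {}" by auto
  have c2: "card ((\<lambda>a. (a,n)) ` {a. a < n \<and> Q a n}) = card {a. a < n \<and> Q a n}"
    by (rule card_image) (auto simp: inj_on_def)
  have c3: "card {a. a < n \<and> Q a n} = (\<Sum>a<n. if Q a n then 1 else (0::nat))"
  proof -
    have "{a. a < n \<and> Q a n} = {a \<in> {..<n}. Q a n}" by auto
    then show ?thesis by (simp add: sum.inter_filter[symmetric])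
  qed
  show ?case unfolding eq card_Un_disjoint[OF fin1 fin2 disj] c2 c3 Suc.IH by simp
qed

lemma sum_lt_num: "(\<Sum>x<numeral n. f (x::nat)) = f (pred_numeral n) + (\<Sum>x<pred_numeral n. f x)"
  by (simp add: numeral_eq_Suc add.commute)

lemma Can_card: "card (Can k) = (\<Sum>b<28. \<Sum>a<b. if B a b ! 0 = a \<and> B a b ! 1 = b \<and> length (B a b) = k then 1 else (0::nat))"
  unfolding Can_def using card_pairs[of 28 "\<lambda>a b. B a b ! 0 = a \<and> B a b ! 1 = b \<and> length (B a b) = k"]
  by simp

lemma Can2: "card (Can 2) = 240" unfolding Can_card by (simp add: sum_lt_num B_simps B_0_1s)
lemma Can3: "card (Can 3) = 32" unfolding Can_card by (simp add: sum_lt_num B_simps B_0_1s)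
lemma Can4: "card (Can 4) = 7" unfolding Can_card by (simp add: sum_lt_num B_simps B_0_1s)

theorem proposition3p3:
  shows "(\<forall>P\<in>P2. card (lines_through bitangent_arr P) \<le> 4)
     \<and> n_pts bitangent_arr 2 = 240
     \<and> n_pts bitangent_arr 3 = 32
     \<and> n_pts bitangent_arr 4 = 7"
proof (intro conjI)
  show "\<forall>P\<in>P2. card (lines_through bitangent_arr P) \<le> 4"
  proof
    fix P assume "P \<in> P2"
    then obtain p where p: "p \<noteq> (0,0,0)" "P = proj_class p" unfolding P2_def by auto
    show "card (lines_through bitangent_arr P) \<le> 4" using S_le4[OF p(1)] card_lt p(2) by simp
  qed
  show "n_pts bitangent_arr 2 = 240" unfolding n_pts_def using main_count[of 2] Can2 by simp
  show "n_pts bitangent_arr 3 = 32" unfolding n_pts_def using main_count[of 3] Can3 by simp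
  show "n_pts bitangent_arr 4 = 7" unfolding n_pts_def using main_count[of 4] Can4 by simp
qed

end
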